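(* Every orthogonal polygon $P$ without holes that has at most $k$ knobs and no non-knob convex vertex has at most $4k-4$ vertices.
   Context: $P$ is a simple polygon with integer vertex coordinates and axis-parallel edges. A vertex is convex if its interior angle is $90^\circ$ and concave if it is $270^\circ$. A knob is an edge both of whose endpoints are convex vertices. A convex vertex is non-knob if neither of its two incident edges is a knob (equivalently, both its neighbouring vertices are concave). *)

theory Defs
  imports "HOL-Analysis.Analysis"
begin

text \<open>An orthogonal polygon is given by the cyclic list of its vertices
  P!0, ..., P!(n-1) (integer coordinates); edge i joins P!i and P!((i+1) mod n).\<close>

definition vtx :: "(int \<times> int) list \<Rightarrow> int \<Rightarrow> int \<times> int" where
  "vtx P i = P ! nat (i mod int (length P))"

definition to_real :: "int \<times> int \<Rightarrow> real \<times> real" where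
  "to_real p = (real_of_int (fst p), real_of_int (snd p))"

definition edge_seg :: "(int \<times> int) list \<Rightarrow> nat \<Rightarrow> (real \<times> real) set" where
  "edge_seg P i = closed_segment (to_real (vtx P (int i))) (to_real (vtx P (int i + 1)))"

definition horiz_edge :: "(int \<times> int) list \<Rightarrow> nat \<Rightarrow> bool" where
  "horiz_edge P i \<longleftrightarrow> snd (vtx P (int i)) = snd (vtx P (int i + 1))
                     \<and> fst (vtx P (int i)) \<noteq> fst (vtx P (int i + 1))"

definition vert_edge :: "(int \<times> int) list \<Rightarrow> nat \<Rightarrow> bool" where
  "vert_edge P i \<longleftrightarrow> fst (vtx P (int i)) = fst (vtx P (int i + 1))
                     \<and> snd (vtx P (int i)) \<noteq> snd (vtx P (int i + 1))"

definition simple_orth_polygon :: "(int \<times> int) list \<Rightarrow> bool" where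
  "simple_orth_polygon P \<longleftrightarrow>
     (let n = length P in
      n \<ge> 4 \<and> distinct P \<and>
      (\<forall>i<n. (horiz_edge P i \<and> vert_edge P ((i+1) mod n)) \<or>
             (vert_edge P i \<and> horiz_edge P ((i+1) mod n))) \<and>
      (\<forall>i<n. edge_seg P i \<inter> edge_seg P ((i+1) mod n) = {to_real (vtx P (int i + 1))}) \<and>
      (\<forall>i<n. \<forall>j<n. i \<noteq> j \<and> j \<noteq> (i+1) mod n \<and> i \<noteq> (j+1) mod n
              \<longrightarrow> edge_seg P i \<inter> edge_seg P j = {}))"

text \<open>Twice the signed (shoelace) area; positive iff counterclockwise.\<close>
definition signed_area2 :: "(int \<times> int) list \<Rightarrow> int" where
  "signed_area2 P = (\<Sum>i<length P. fst (vtx P (int i)) * snd (vtx P (int i + 1))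
                                    - fst (vtx P (int i + 1)) * snd (vtx P (int i)))"

definition turn :: "(int \<times> int) list \<Rightarrow> int \<Rightarrow> int" where
  "turn P i = (let a = vtx P (i - 1); b = vtx P i; c = vtx P (i + 1) in
     (fst b - fst a) * (snd c - snd b) - (snd b - snd a) * (fst c - fst b))"

text \<open>Vertex i is convex (interior angle 90 degrees) iff the boundary turns towards the
  interior there, i.e. the turn has the same sign as the orientation; otherwise
  (for a simple orthogonal polygon) it is concave (270 degrees).\<close>
definition convex_vertex :: "(int \<times> int) list \<Rightarrow> int \<Rightarrow> bool" where
  "convex_vertex P i \<longleftrightarrow> turn P i * signed_area2 P > 0"

definition concave_vertex :: "(int \<times> int) list \<Rightarrow> int \<Rightarrow> bool" where
  "concave_vertex P i \<longleftrightarrow> turn P i * signed_area2 P < 0"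

definition knobs :: "(int \<times> int) list \<Rightarrow> nat set" where
  "knobs P = {i. i < length P \<and> convex_vertex P (int i) \<and> convex_vertex P (int i + 1)}"

definition nonknob_convex :: "(int \<times> int) list \<Rightarrow> int \<Rightarrow> bool" where
  "nonknob_convex P i \<longleftrightarrow> convex_vertex P i \<and> concave_vertex P (i - 1) \<and> concave_vertex P (i + 1)"

end

theory Submission
  imports Defs "HOL-Complex_Analysis.Complex_Analysis"
begin

lemma modc: "(i::int) mod m = j mod m \<Longrightarrow> (i + c) mod m = (j + c) mod m"
  by (metis mod_add_left_eq)

locale opoly =
  fixes P :: "(int \<times> int) list" and n :: nat
  assumes sop: "simple_orth_polygon P" and nP: "length P = n"
begin

definition X :: "int \<Rightarrow> int" where "X i = fst (vtx P i)"
definition Y :: "int \<Rightarrow> int" where "Y i = snd (vtx P i)"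
definition V :: "int \<Rightarrow> complex" where "V i = Complex (of_int (X i)) (of_int (Y i))"
definition e :: "int \<Rightarrow> complex" where "e i = V (i+1) - V i"
definition hor :: "int \<Rightarrow> bool" where "hor i \<longleftrightarrow> Y (i+1) = Y i \<and> X (i+1) \<noteq> X i"
definition ver :: "int \<Rightarrow> bool" where "ver i \<longleftrightarrow> X (i+1) = X i \<and> Y (i+1) \<noteq> Y i"

lemma n_ge4: "n \<ge> 4"
  using sop nP unfolding simple_orth_polygon_def Let_def by blast

lemma n_pos: "n > 0" using n_ge4 by simp

lemma vtx_cong: "i mod int n = j mod int n \<Longrightarrow> vtx P i = vtx P j"
  by (simp add: vtx_def nP)

lemma X_cong: "i mod int n = j mod int n \<Longrightarrow> X i = X j"
  using vtx_cong[of i j] by (simp add: X_def)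
lemma Y_cong: "i mod int n = j mod int n \<Longrightarrow> Y i = Y j"
  using vtx_cong[of i j] by (simp add: Y_def)
lemma V_cong: "i mod int n = j mod int n \<Longrightarrow> V i = V j"
  using X_cong[of i j] Y_cong[of i j] by (simp add: V_def)
lemma e_cong: "i mod int n = j mod int n \<Longrightarrow> e i = e j"
  unfolding e_def using V_cong[of i j] V_cong[of "i+1" "j+1"] modc[of i n j 1] by simp
lemma hor_cong: "i mod int n = j mod int n \<Longrightarrow> hor i = hor j"
  unfolding hor_def using X_cong[of i j] Y_cong[of i j] X_cong[of "i+1" "j+1"] Y_cong[of "i+1" "j+1"] modc[of i n j 1] by simp
lemma ver_cong: "i mod int n = j mod int n \<Longrightarrow> ver i = ver j"
  unfolding ver_def using X_cong[of i j] Y_cong[of i j] X_cong[of "i+1" "j+1"] Y_cong[of "i+1" "j+1"] modc[of i n j 1] by simp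

lemma hv: "(hor i \<and> ver (i+1)) \<or> (ver i \<and> hor (i+1))"
proof -
  define k where "k = nat (i mod int n)"
  have k: "k < n" "int k = i mod int n" using n_pos by (auto simp: k_def nat_less_iff)
  have "(horiz_edge P k \<and> vert_edge P ((k+1) mod n)) \<or> (vert_edge P k \<and> horiz_edge P ((k+1) mod n))"
  proof -
    have "\<forall>i<n. (horiz_edge P i \<and> vert_edge P ((i+1) mod n)) \<or> (vert_edge P i \<and> horiz_edge P ((i+1) mod n))"
      using sop unfolding simple_orth_polygon_def Let_def nP by blast
    thus ?thesis using k by blast
  qed
  moreover have "horiz_edge P k = hor (int k)" "vert_edge P k = ver (int k)"
    by (auto simp: horiz_edge_def vert_edge_def hor_def ver_def X_def Y_def)
  moreover have "horiz_edge P ((k+1) mod n) = hor (int ((k+1) mod n))" "vert_edge P ((k+1) mod n) = ver (int ((k+1) mod n))"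
    by (auto simp: horiz_edge_def vert_edge_def hor_def ver_def X_def Y_def)
  moreover have "hor (int k) = hor i" "ver (int k) = ver i" using k
    by (auto intro!: hor_cong ver_cong)
  moreover have "int ((k+1) mod n) mod int n = (i+1) mod int n"
    using k by (simp add: zmod_int mod_add_right_eq add.commute)
  hence "hor (int ((k+1) mod n)) = hor (i+1)" "ver (int ((k+1) mod n)) = ver (i+1)"
    by (auto intro!: hor_cong ver_cong)
  ultimately show ?thesis by auto
qed

lemma hor_ver: "hor i \<or> ver i" using hv[of i] by auto

lemma not_hor_ver: "\<not> (hor i \<and> ver i)" by (auto simp: hor_def ver_def)

lemma e_nz: "e i \<noteq> 0"
  using hor_ver[of i] by (auto simp: e_def V_def hor_def ver_def complex_eq_iff)

lemma Re_V[simp]: "Re (V i) = of_int (X i)" and Im_V[simp]: "Im (V i) = of_int (Y i)"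
  by (simp_all add: V_def)

end


context opoly begin

lemma vtx_XY: "vtx P i = (X i, Y i)" by (simp add: X_def Y_def)

lemma kmod: "int (nat (k mod int n)) = k mod int n" "nat (k mod int n) < n"
  using n_pos by (auto simp: nat_less_iff)

lemma seg_mem:
  assumes "0 \<le> l" "l \<le> 1"
  shows "(Re (V k + of_real l * e k), Im (V k + of_real l * e k)) \<in> edge_seg P (nat (k mod int n))"
proof -
  have a: "vtx P (int (nat (k mod int n))) = vtx P k"
    using kmod vtx_cong[of "int (nat (k mod int n))" k] by simp
  have b: "vtx P (int (nat (k mod int n)) + 1) = vtx P (k+1)"
    using kmod vtx_cong[of "k mod int n + 1" "k+1"] by (simp add: mod_add_left_eq)
  show ?thesis
    unfolding edge_seg_def a b closed_segment_def
    apply (rule CollectI, rule exI[of _ l])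
    using assms by (auto simp: to_real_def vtx_XY e_def algebra_simps)
qed

lemma C1: "i < n \<Longrightarrow> edge_seg P i \<inter> edge_seg P ((i+1) mod n) = {to_real (vtx P (int i + 1))}"
  using sop unfolding simple_orth_polygon_def Let_def nP by blast

lemma C2: "i < n \<Longrightarrow> j < n \<Longrightarrow> i \<noteq> j \<Longrightarrow> j \<noteq> (i+1) mod n \<Longrightarrow> i \<noteq> (j+1) mod n \<Longrightarrow> edge_seg P i \<inter> edge_seg P j = {}"
  using sop unfolding simple_orth_polygon_def Let_def nP by blast

lemma pt_eq_vtx:
  assumes "(Re z, Im z) = to_real (vtx P m)" shows "z = V m"
  using assms by (simp add: to_real_def vtx_XY complex_eq_iff)

lemma inj_pt:
  assumes l: "0 \<le> l" "l < 1" and m: "0 \<le> m" "m < 1"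
    and eq: "V k + of_real l * e k = V k' + of_real m * e k'"
  shows "k mod int n = k' mod int n \<and> l = m"
proof -
  define i where "i = nat (k mod int n)"
  define j where "j = nat (k' mod int n)"
  define z where "z = V k + of_real l * e k"
  have i: "i < n" "int i = k mod int n" using kmod by (auto simp: i_def)
  have j: "j < n" "int j = k' mod int n" using kmod by (auto simp: j_def)
  have zi: "(Re z, Im z) \<in> edge_seg P i" unfolding z_def i_def using seg_mem l by auto
  have zj: "(Re z, Im z) \<in> edge_seg P j" unfolding z_def j_def eq using seg_mem m by auto
  consider "i = j" | "i \<noteq> j" "j = (i+1) mod n" | "i \<noteq> j" "i = (j+1) mod n"
    | "i \<noteq> j" "j \<noteq> (i+1) mod n" "i \<noteq> (j+1) mod n" by blast
  then show ?thesis
  proof cases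
    case 1
    hence km: "k mod int n = k' mod int n" using i j by simp
    hence "V k = V k'" "e k = e k'" by (auto intro: V_cong e_cong)
    hence "of_real l * e k = of_real m * e k" using eq by simp
    hence "l = m" using e_nz[of k] by simp
    thus ?thesis using km by simp
  next
    case 2
    have "(Re z, Im z) = to_real (vtx P (int i + 1))" using C1[OF i(1)] zi zj 2 by blast
    hence "z = V (int i + 1)" by (rule pt_eq_vtx)
    also have "V (int i + 1) = V (k+1)" using i by (intro V_cong) (simp add: mod_add_left_eq)
    finally have "of_real (l - 1) * e k = 0" unfolding z_def e_def by (simp add: algebra_simps)
    hence False using e_nz[of k] l by simp
    thus ?thesis ..
  next
    case 3
    have "(Re z, Im z) = to_real (vtx P (int j + 1))" using C1[OF j(1)] zi zj 3 by blast
    hence "z = V (int j + 1)" by (rule pt_eq_vtx)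
    also have "V (int j + 1) = V (k'+1)" using j by (intro V_cong) (simp add: mod_add_left_eq)
    finally have "V k' + of_real m * e k' = V (k'+1)" unfolding z_def eq .
    hence "of_real (m - 1) * e k' = 0" unfolding e_def by (simp add: algebra_simps)
    hence False using e_nz[of k'] m by simp
    thus ?thesis ..
  next
    case 4
    thus ?thesis using C2[OF i(1) j(1)] zi zj by blast
  qed
qed

end


context opoly begin

definition h :: "real \<Rightarrow> complex" where
  "h u = V \<lfloor>u\<rfloor> + of_real (u - of_int \<lfloor>u\<rfloor>) * e \<lfloor>u\<rfloor>"

definition g :: "real \<Rightarrow> complex" where "g t = h (real n * t)"

lemma h_seg: assumes "0 \<le> l" "l \<le> 1" shows "h (of_int k + l) = V k + of_real l * e k"
proof (cases "l = 1")
  case True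
  have "\<lfloor>of_int k + l\<rfloor> = k + 1" using True by simp
  thus ?thesis using True by (simp add: h_def e_def)
next
  case False
  hence "\<lfloor>of_int k + l\<rfloor> = k" using assms by linarith
  thus ?thesis by (simp add: h_def)
qed

lemma h_per: "h (u + of_int (int n * m)) = h u"
proof -
  have fl: "\<lfloor>u + of_int (int n * m)\<rfloor> = \<lfloor>u\<rfloor> + int n * m" by (simp only: floor_add_int)
  have c: "(\<lfloor>u\<rfloor> + int n * m) mod int n = \<lfloor>u\<rfloor> mod int n" by simp
  show ?thesis unfolding h_def fl using V_cong[OF c] e_cong[OF c] by simp
qed

lemma h_cont_on: "continuous_on {of_int k .. of_int k + 1} h"
proof -
  have "continuous_on {of_int k .. of_int k + 1} (\<lambda>u. V k + of_real (u - of_int k) * e k)"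
    by (intro continuous_intros)
  moreover have "\<And>u. u \<in> {of_int k .. of_int k + 1} \<Longrightarrow> h u = V k + of_real (u - of_int k) * e k"
  proof -
    fix u :: real assume "u \<in> {of_int k .. of_int k + 1}"
    hence "h (of_int k + (u - of_int k)) = V k + of_real (u - of_int k) * e k"
      by (intro h_seg) auto
    thus "h u = V k + of_real (u - of_int k) * e k" by simp
  qed
  ultimately show ?thesis using continuous_on_cong by (metis (no_types, lifting))
qed

lemma h_cont: "continuous_on UNIV h"
proof (rule continuous_at_imp_continuous_on, rule ballI)
  fix u :: real
  define k where "k = \<lfloor>u\<rfloor>"
  have "continuous_on ({of_int (k-1) .. of_int (k-1) + 1} \<union> {of_int k .. of_int k + 1}) h"
    by (intro continuous_on_closed_Un h_cont_on) auto
  moreover have "{of_int (k-1) .. of_int (k-1) + 1} \<union> {of_int k .. of_int k + 1} = {of_int k - 1 .. of_int k + (1::real)}"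
    by auto
  ultimately have "continuous_on {of_int k - 1 <..< of_int k + (1::real)} h"
    by (metis continuous_on_subset greaterThanLessThan_subseteq_atLeastAtMost_iff order_refl)
  moreover have "u \<in> {of_int k - 1 <..< of_int k + (1::real)}" unfolding k_def by auto linarith
  ultimately show "isCont h u"
    using continuous_on_eq_continuous_at open_greaterThanLessThan by blast
qed

lemma g_cont: "continuous_on UNIV g"
  unfolding g_def by (intro continuous_on_compose2[OF h_cont]) (auto intro!: continuous_intros)

lemma g_seg: assumes "0 \<le> l" "l \<le> 1" shows "g ((of_int k + l) / real n) = V k + of_real l * e k"
  using h_seg[OF assms] n_pos by (simp add: g_def)

lemma g_V: "g (of_int k / real n) = V k"
  using g_seg[of 0 k] by simp

lemma g_per_int: "g (t + of_int m) = g t"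
proof -
  have "real n * (t + of_int m) = real n * t + of_int (int n * m)" by (simp add: algebra_simps)
  thus ?thesis unfolding g_def using h_per by simp
qed

lemma g_per: "g (t + 1) = g t" using g_per_int[of t 1] by simp

lemma g_form: "\<exists>k l. 0 \<le> l \<and> l < 1 \<and> g t = V k + of_real l * e k \<and> real n * t = of_int k + l"
  by (rule exI[of _ "\<lfloor>real n * t\<rfloor>"], rule exI[of _ "real n * t - of_int \<lfloor>real n * t\<rfloor>"])
     (use frac_lt_1[of "real n * t"] in \<open>auto simp: g_def h_def frac_def\<close>)

lemma g_inj: assumes "g s = g t" shows "\<exists>m::int. t - s = of_int m"
proof -
  obtain k l where kl: "0 \<le> l" "l < 1" "g s = V k + of_real l * e k" "real n * s = of_int k + l"
    using g_form by blast
  obtain k' l' where kl': "0 \<le> l'" "l' < 1" "g t = V k' + of_real l' * e k'" "real n * t = of_int k' + l'"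
    using g_form by blast
  have eq: "V k + of_real l * e k = V k' + of_real l' * e k'" using kl(3) kl'(3) assms by simp
  have "k mod int n = k' mod int n \<and> l = l'"
    using inj_pt[OF kl(1,2) kl'(1,2) eq] .
  then obtain q where q: "k' = k + int n * q"
    by (metis mod_eqE mult.commute add.commute diff_add_cancel)
  have "real n * (t - s) = real n * of_int q" using kl(4) kl'(4) q \<open>_ \<and> l = l'\<close>
    by (simp add: algebra_simps)
  hence "t - s = of_int q" using n_pos by simp
  thus ?thesis by blast
qed

end


lemma wn_lift:
  assumes "continuous_on {0..1} q" "\<And>t. t \<in> {0..1} \<Longrightarrow> p t = exp (q t)"
  shows "winding_number p 0 = (q 1 - q 0) / (2 * of_real pi * \<i>)"
proof -
  have "winding_number p 0 = winding_number (exp \<circ> q) 0"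
    by (rule winding_number_cong) (simp add: assms)
  also have "\<dots> = (pathfinish q - pathstart q) / (2 * of_real pi * \<i>)"
    by (rule winding_number_compose_exp) (simp add: path_def assms)
  finally show ?thesis by (simp add: pathfinish_def pathstart_def)
qed

lemma Re_div_2pii: "Re (z / (2 * of_real pi * \<i>)) = Im z / (2 * pi)"
  by (simp add: Re_divide field_simps power2_eq_square)

lemma wn_slit:
  assumes "continuous_on {0..1} u" "\<And>t. t \<in> {0..1} \<Longrightarrow> u t \<notin> \<real>\<^sub>\<le>\<^sub>0" "a \<noteq> 0"
    "\<And>t. t \<in> {0..1} \<Longrightarrow> p t = a * u t"
  shows "Re (winding_number p 0) = (Im (Ln (u 1)) - Im (Ln (u 0))) / (2 * pi)"
proof -
  have "winding_number p 0 = ((Ln a + Ln (u 1)) - (Ln a + Ln (u 0))) / (2 * of_real pi * \<i>)"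
  proof (rule wn_lift[where q = "\<lambda>t. Ln a + Ln (u t)"])
    show "continuous_on {0..1} (\<lambda>t. Ln a + Ln (u t))"
      using assms(1,2) by (intro continuous_intros) auto
    fix t :: real assume t: "t \<in> {0..1}"
    have "u t \<noteq> 0" using assms(2)[OF t] by auto
    thus "p t = exp (Ln a + Ln (u t))" using assms(3) assms(4)[OF t] by (simp add: exp_add)
  qed
  thus ?thesis by (simp add: Re_div_2pii)
qed

lemma imln_i: "r \<noteq> 0 \<Longrightarrow> Im (Ln (Complex 0 r)) = sgn r * pi / 2"
proof (cases "r > 0")
  case True
  have "Complex 0 r = of_real r * \<i>" by (simp add: complex_eq_iff)
  hence "Arg (Complex 0 r) = pi/2" using True by simp
  moreover have "Complex 0 r \<noteq> 0" using True by (simp add: complex_eq_iff)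
  ultimately show ?thesis using True Arg_eq_Im_Ln by simp
next
  case False
  assume r: "r \<noteq> 0"
  hence r': "-r > 0" using False by simp
  have eq: "Complex 0 r = of_real (-r) * (-\<i>)" by (simp add: complex_eq_iff)
  have "Arg (of_real (-r) * (-\<i>)) = Arg (-\<i>)" by (rule Arg_times_of_real[OF r'])
  hence "Arg (Complex 0 r) = Arg (-\<i>)" by (simp only: eq)
  also have "\<dots> = - pi/2" using Arg_eq_Im_Ln[of "-\<i>"] by simp
  finally have "Arg (Complex 0 r) = - pi/2" .
  moreover have "Complex 0 r \<noteq> 0" using r by (simp add: complex_eq_iff)
  ultimately show ?thesis using r' Arg_eq_Im_Ln by simp
qed

lemma imln_r: "r > 0 \<Longrightarrow> Im (Ln (Complex r 0)) = 0"
proof -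
  assume "r > 0"
  have "Complex r 0 = of_real r" by (simp add: complex_eq_iff)
  thus ?thesis using \<open>r > 0\<close> by simp
qed

lemma not_nonpos_Re: "Re z > 0 \<Longrightarrow> z \<notin> \<real>\<^sub>\<le>\<^sub>0"
  by (auto simp: nonpos_Reals_def)
lemma not_nonpos_Im: "Im z \<noteq> 0 \<Longrightarrow> z \<notin> \<real>\<^sub>\<le>\<^sub>0"
  by (auto simp: nonpos_Reals_def)

lemma wn_perp:
  assumes "a \<noteq> 0" "b \<noteq> 0" "Re (cnj a * b) = 0" "c \<noteq> 0"
    "\<And>t. t \<in> {0..1} \<Longrightarrow> p t = c * linepath a b t"
  shows "Re (winding_number p 0) = sgn (Im (cnj a * b)) / 4"
proof -
  define w where "w = b / a"
  have w: "w = cnj a * b / of_real ((cmod a)^2)"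
    using assms(1) unfolding w_def by (simp add: complex_div_cnj[of b a] mult.commute)
  have Rew: "Re w = 0" using assms(3) by (simp add: w Re_divide_of_real)
  have Imw: "Im w = Im (cnj a * b) / (cmod a)^2" by (simp add: w Im_divide_of_real)
  have wnz: "w \<noteq> 0" using assms(1,2) by (simp add: w_def)
  hence Imwnz: "Im w \<noteq> 0" using Rew by (simp add: complex_eq_iff)
  define u where "u t = (1 - of_real t) + of_real t * w" for t
  have "Re (winding_number p 0) = (Im (Ln (u 1)) - Im (Ln (u 0))) / (2 * pi)"
  proof (rule wn_slit[where a = "c * a"])
    show "continuous_on {0..1} u" unfolding u_def by (intro continuous_intros)
    fix t :: real assume t: "t \<in> {0..1}"
    show "u t \<notin> \<real>\<^sub>\<le>\<^sub>0"
    proof (cases "t = 1")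
      case True thus ?thesis using Imwnz by (simp add: u_def not_nonpos_Im)
    next
      case False thus ?thesis using t Rew by (intro not_nonpos_Re) (simp add: u_def)
    qed
    show "p t = c * a * u t" using assms(1) assms(5)[OF t]
      by (simp add: u_def linepath_def w_def scaleR_conv_of_real algebra_simps)
  qed (use assms in auto)
  also have "u 1 = Complex 0 (Im w)" using Rew by (simp add: u_def complex_eq_iff)
  also have "u 0 = 1" by (simp add: u_def)
  finally have "Re (winding_number p 0) = sgn (Im w) * pi / 2 / (2 * pi)"
    using imln_i[OF Imwnz] by simp
  also have "sgn (Im w) = sgn (Im (cnj a * b))" using assms(1) by (simp add: Imw sgn_divide)
  finally show ?thesis by simp
qed



lemma cvx_le: "(u::real) \<ge> 0 \<Longrightarrow> v \<ge> 0 \<Longrightarrow> u + v = 1 \<Longrightarrow> c \<le> p \<Longrightarrow> c \<le> q \<Longrightarrow> c \<le> u * p + v * q"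
proof -
  assume a: "u \<ge> 0" "v \<ge> 0" "u + v = 1" "c \<le> p" "c \<le> q"
  have "u * c \<le> u * p" "v * c \<le> v * q" using a by (auto intro: mult_left_mono)
  moreover have "c = u * c + v * c" using a(3) by (metis mult_1 distrib_right)
  ultimately show ?thesis by linarith
qed

lemma cvx_ge: "(u::real) \<ge> 0 \<Longrightarrow> v \<ge> 0 \<Longrightarrow> u + v = 1 \<Longrightarrow> p \<le> c \<Longrightarrow> q \<le> c \<Longrightarrow> u * p + v * q \<le> c"
proof -
  assume a: "u \<ge> 0" "v \<ge> 0" "u + v = 1" "p \<le> c" "q \<le> c"
  have "u * p \<le> u * c" "v * q \<le> v * c" using a by (auto intro: mult_left_mono)
  moreover have "c = u * c + v * c" using a(3) by (metis mult_1 distrib_right)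
  ultimately show ?thesis by linarith
qed

context opoly begin

definition low :: "int \<Rightarrow> bool" where
  "low j \<longleftrightarrow> (\<forall>k. Y j \<le> Y k \<and> (Y k = Y j \<longrightarrow> X j \<le> X k))"

lemma low_exists: "\<exists>j. 0 \<le> j \<and> j < int n \<and> low j"
proof -
  define A where "A = {0..<int n}"
  have A: "finite A" "A \<noteq> {}" using n_pos by (auto simp: A_def)
  define m where "m = Min (Y ` A)"
  define S where "S = {k \<in> A. Y k = m}"
  have "m \<in> Y ` A" unfolding m_def using A by simp
  hence S: "finite S" "S \<noteq> {}" using A by (auto simp: S_def)
  define mx where "mx = Min (X ` S)"
  have "mx \<in> X ` S" unfolding mx_def using S by simp
  then obtain j where j: "j \<in> S" "X j = mx" by auto
  have "low j" unfolding low_def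
  proof
    fix k
    define k' where "k' = k mod int n"
    have k': "k' \<in> A" "X k = X k'" "Y k = Y k'" using n_pos
      by (auto simp: k'_def A_def intro!: X_cong Y_cong)
    have "Y j = m" using j S_def by simp
    moreover have "m \<le> Y k'" using k' A unfolding m_def by simp
    moreover have "Y k' = m \<Longrightarrow> mx \<le> X k'" using k' S unfolding mx_def S_def by simp
    ultimately show "Y j \<le> Y k \<and> (Y k = Y j \<longrightarrow> X j \<le> X k)" using k' j by simp
  qed
  moreover have "0 \<le> j \<and> j < int n" using j by (auto simp: S_def A_def)
  ultimately show ?thesis by blast
qed

lemma gs: "0 \<le> l \<Longrightarrow> l \<le> 1 \<Longrightarrow> t = (of_int k + l) / real n \<Longrightarrow> g t = V k + of_real l * e k"
  using g_seg by simp

lemma gdiff: "0 < t - s \<Longrightarrow> t - s < 1 \<Longrightarrow> g t \<noteq> g s"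
proof
  assume a: "0 < t - s" "t - s < 1" "g t = g s"
  have "g s = g t" using a by simp
  then obtain m :: int where m: "t - s = of_int m" using g_inj[of s t] by blast
  hence "of_int m > (0::real)" "(1::real) > of_int m" using a by linarith+
  hence "m > 0" "1 > m" by linarith+
  thus False by linarith
qed

definition tsg :: "int \<Rightarrow> int" where "tsg i = sgn (turn P i)"

lemma turn_eq: "turn P i = (X i - X (i-1)) * (Y (i+1) - Y i) - (Y i - Y (i-1)) * (X (i+1) - X i)"
  by (simp add: turn_def Let_def X_def Y_def)

lemma cross_turn: "Im (cnj (e (i-1)) * e i) = of_int (turn P i)"
  by (simp add: turn_eq e_def algebra_simps)

lemma perp: "Re (cnj (e (i-1)) * e i) = 0"
  using hv[of "i-1"] by (auto simp: e_def hor_def ver_def)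

lemma turn_nz: "turn P i \<noteq> 0"
  using hv[of "i-1"] by (auto simp: turn_eq hor_def ver_def)

lemma turn_cong: "i mod int n = j mod int n \<Longrightarrow> turn P i = turn P j"
  unfolding turn_eq using X_cong[of i j] Y_cong[of i j] X_cong[of "i+1" "j+1"] Y_cong[of "i+1" "j+1"]
    X_cong[of "i-1" "j-1"] Y_cong[of "i-1" "j-1"] modc[of i n j 1] modc[of i n j "-1"] by simp

end


locale opoly_low = opoly +
  fixes j0 :: int
  assumes low: "low j0"
begin

lemma g_low: "of_int (Y j0) \<le> Im (g t) \<and> (Im (g t) = of_int (Y j0) \<longrightarrow> of_int (X j0) \<le> Re (g t))"
proof -
  obtain k l where kl: "0 \<le> l" "l < 1" "g t = V k + of_real l * e k"
    using g_form by blast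
  define y0 where "y0 = real_of_int (Y j0)"
  define x0 where "x0 = real_of_int (X j0)"
  define a where "a = real_of_int (Y k)"
  define b where "b = real_of_int (Y (k+1))"
  define c where "c = real_of_int (X k)"
  define d where "d = real_of_int (X (k+1))"
  have ya: "y0 \<le> a" "y0 \<le> b" using low unfolding low_def y0_def a_def b_def by auto
  have xa: "a = y0 \<Longrightarrow> x0 \<le> c" "b = y0 \<Longrightarrow> x0 \<le> d" using low unfolding low_def y0_def a_def b_def x0_def c_def d_def by auto
  have Im: "Im (g t) = (1 - l) * a + l * b" unfolding kl(3) by (simp add: e_def a_def b_def algebra_simps)
  have Re: "Re (g t) = (1 - l) * c + l * d" unfolding kl(3) by (simp add: e_def c_def d_def algebra_simps)
  have p1: "(1 - l) * (a - y0) \<ge> 0" "l * (b - y0) \<ge> 0" using kl ya by auto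
  have i1: "Im (g t) - y0 = (1 - l) * (a - y0) + l * (b - y0)" unfolding Im by (simp add: algebra_simps)
  have "y0 \<le> Im (g t)" using i1 p1 by linarith
  moreover have "x0 \<le> Re (g t)" if eq: "Im (g t) = y0"
  proof -
    have z1: "(1 - l) * (a - y0) = 0" "l * (b - y0) = 0" using i1 p1 eq by linarith+
    hence "a = y0" using kl by simp
    hence "x0 \<le> c" by (rule xa)
    have q1: "(1 - l) * (c - x0) \<ge> 0" using \<open>x0 \<le> c\<close> kl by simp
    have q2: "l * (d - x0) \<ge> 0"
    proof (cases "l = 0")
      case False hence "b = y0" using z1 by simp
      thus ?thesis using xa kl by simp
    qed simp
    have "Re (g t) - x0 = (1 - l) * (c - x0) + l * (d - x0)" unfolding Re by (simp add: algebra_simps)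
    thus ?thesis using q1 q2 by linarith
  qed
  ultimately show ?thesis unfolding y0_def x0_def by blast
qed

lemma g_slit: assumes "g t \<noteq> V j0" shows "g t - V j0 \<notin> \<real>\<^sub>\<le>\<^sub>0"
proof -
  have "Im (g t - V j0) > 0 \<or> (Im (g t - V j0) = 0 \<and> Re (g t - V j0) > 0)"
    using g_low[of t] assms by (auto simp: complex_eq_iff)
  thus ?thesis using not_nonpos_Re not_nonpos_Im by auto
qed

definition "N = real n"
definition "b = of_int j0 / N"
definition "d = 1 / N"

lemma N_ge4: "N \<ge> 4" using n_ge4 by (simp add: N_def)
lemma d_pos: "0 < d" and d_le: "d \<le> 1/4" using N_ge4 by (auto simp: d_def divide_simps)

lemma gb: "g b = V j0" using g_V by (simp add: b_def N_def)
lemma gbd: "g (b + d) = V (j0 + 1)"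
  using g_V[of "j0+1"] N_ge4 by (simp add: b_def d_def N_def add_divide_distrib)
lemma gbmd: "g (b + 1 - d) = V (j0 - 1)"
proof -
  have "g (b + 1 - d) = g ((b - d) + 1)" by (simp add: algebra_simps)
  also have "\<dots> = g (b - d)" by (rule g_per)
  also have "b - d = of_int (j0 - 1) / real n" by (simp add: b_def d_def N_def diff_divide_distrib)
  finally show ?thesis using g_V[of "j0 - 1"] by simp
qed

definition "Q l = g (b + d + l * (1 - 2 * d)) - g b"
definition "Dp l = g (b + l * (1 - d) + d) - g (b + l * (1 - d))"

lemma Q_cont: "continuous_on {0..1} Q"
  unfolding Q_def by (intro continuous_intros continuous_on_compose2[OF g_cont]) auto

lemma Q_slit: "l \<in> {0..1} \<Longrightarrow> Q l \<notin> \<real>\<^sub>\<le>\<^sub>0"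
proof -
  assume l: "l \<in> {0..1}"
  have "0 \<le> l * (1 - 2 * d)" "l * (1 - 2 * d) \<le> 1 - 2 * d" using l d_le by (auto simp: mult_le_cancel_right1)
  hence "g (b + d + l * (1 - 2 * d)) \<noteq> g b" using d_pos by (intro gdiff) auto
  thus ?thesis unfolding Q_def gb by (intro g_slit) (simp add: gb)
qed

end


context opoly_low begin

lemma dir_j0:
  "(hor j0 \<and> ver (j0-1) \<and> X (j0+1) > X j0 \<and> Y (j0-1) > Y j0) \<or>
   (ver j0 \<and> hor (j0-1) \<and> Y (j0+1) > Y j0 \<and> X (j0-1) > X j0)"
proof -
  have h: "(hor (j0-1) \<and> ver j0) \<or> (ver (j0-1) \<and> hor j0)" using hv[of "j0-1"] by simp
  have l1: "Y j0 \<le> Y (j0+1)" "Y j0 \<le> Y (j0-1)" "Y (j0+1) = Y j0 \<Longrightarrow> X j0 \<le> X (j0+1)"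
    "Y (j0-1) = Y j0 \<Longrightarrow> X j0 \<le> X (j0-1)" using low by (auto simp: low_def)
  from h show ?thesis
  proof
    assume a: "hor (j0-1) \<and> ver j0"
    hence "Y j0 = Y (j0-1)" "X j0 \<noteq> X (j0-1)" "X (j0+1) = X j0" "Y (j0+1) \<noteq> Y j0"
      by (auto simp: hor_def ver_def)
    thus ?thesis using a l1 by auto
  next
    assume a: "ver (j0-1) \<and> hor j0"
    hence "X j0 = X (j0-1)" "Y j0 \<noteq> Y (j0-1)" "Y (j0+1) = Y j0" "X (j0+1) \<noteq> X j0"
      by (auto simp: hor_def ver_def)
    thus ?thesis using a l1 by auto
  qed
qed

lemma WQ: "Re (winding_number Q 0) = of_int (tsg j0) / 4"
proof -
  have "Re (winding_number Q 0) = (Im (Ln (Q 1)) - Im (Ln (Q 0))) / (2 * pi)"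
    by (rule wn_slit[where a = 1]) (use Q_cont Q_slit in auto)
  moreover have Q0: "Q 0 = V (j0+1) - V j0" unfolding Q_def using gbd gb by simp
  moreover have Q1: "Q 1 = V (j0-1) - V j0" unfolding Q_def using gbmd gb by (simp add: algebra_simps)
  moreover note dir_j0
  ultimately show ?thesis
  proof (elim disjE conjE)
    assume W: "Re (winding_number Q 0) = (Im (Ln (Q 1)) - Im (Ln (Q 0))) / (2 * pi)"
      and a: "hor j0" "ver (j0 - 1)" "X j0 < X (j0 + 1)" "Y j0 < Y (j0 - 1)"
    have "Q 0 = Complex (of_int (X (j0+1) - X j0)) 0" using a Q0 by (simp add: complex_eq_iff hor_def)
    hence i0: "Im (Ln (Q 0)) = 0" using a imln_r by simp
    have "Q 1 = Complex 0 (of_int (Y (j0-1) - Y j0))" using a Q1 by (simp add: complex_eq_iff ver_def)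
    hence i1: "Im (Ln (Q 1)) = pi/2" using a imln_i by simp
    have "turn P j0 > 0" using a unfolding turn_eq hor_def ver_def by (simp add: mult_neg_pos)
    hence "tsg j0 = 1" by (simp add: tsg_def)
    thus ?thesis using W i0 i1 by simp
  next
    assume W: "Re (winding_number Q 0) = (Im (Ln (Q 1)) - Im (Ln (Q 0))) / (2 * pi)"
      and a: "ver j0" "hor (j0 - 1)" "Y j0 < Y (j0 + 1)" "X j0 < X (j0 - 1)"
    have "Q 0 = Complex 0 (of_int (Y (j0+1) - Y j0))" using a Q0 by (simp add: complex_eq_iff ver_def)
    hence i0: "Im (Ln (Q 0)) = pi/2" using a imln_i by simp
    have "Q 1 = Complex (of_int (X (j0-1) - X j0)) 0" using a Q1 by (simp add: complex_eq_iff hor_def)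
    hence i1: "Im (Ln (Q 1)) = 0" using a imln_r by simp
    have "turn P j0 < 0" using a unfolding turn_eq hor_def ver_def by (simp add: mult_neg_pos)
    hence "tsg j0 = -1" by (simp add: tsg_def)
    thus ?thesis using W i0 i1 by simp
  qed
qed

lemma WnQ: "Re (winding_number (\<lambda>l. - Q l) 0) = of_int (tsg j0) / 4"
proof -
  have "Re (winding_number (\<lambda>l. - Q l) 0) = (Im (Ln (Q 1)) - Im (Ln (Q 0))) / (2 * pi)"
    by (rule wn_slit[where a = "-1"]) (use Q_cont Q_slit in auto)
  also have "\<dots> = Re (winding_number Q 0)"
    by (rule sym, rule wn_slit[where a = 1]) (use Q_cont Q_slit in auto)
  finally show ?thesis using WQ by simp
qed

end


context opoly_low begin

definition F :: "real \<times> real \<Rightarrow> complex" where "F p = g (snd p) - g (fst p)"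
definition R :: "(real \<times> real) set" where
  "R = {p. b \<le> fst p \<and> snd p \<le> b + 1 \<and> d \<le> snd p - fst p \<and> snd p - fst p \<le> 1 - d}"
definition "pA = (b, b + d)"
definition "pB = (b, b + 1 - d)"
definition "pC = (b + d, b + 1)"
definition "pD = (b + 1 - d, b + 1)"
definition "lp = linepath pA pB +++ linepath pB pC +++ linepath pC pD +++ linepath pD pA"

lemma R_convex: "convex R"
  unfolding convex_def R_def
proof (intro ballI allI impI, clarsimp)
  fix a1 a2 b1 b2 u v :: real
  assume a: "b \<le> a1" "a2 \<le> b + 1" "d \<le> a2 - a1" "a2 - a1 \<le> 1 - d"
     "b \<le> b1" "b2 \<le> b + 1" "d \<le> b2 - b1" "b2 - b1 \<le> 1 - d" "0 \<le> u" "0 \<le> v" "u + v = 1"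
  have e1: "u * a2 + v * b2 - (u * a1 + v * b1) = u * (a2 - a1) + v * (b2 - b1)" by (simp add: algebra_simps)
  show "b \<le> u * a1 + v * b1 \<and> u * a2 + v * b2 \<le> b + 1 \<and> d \<le> u * a2 + v * b2 - (u * a1 + v * b1) \<and>
        u * a2 + v * b2 - (u * a1 + v * b1) \<le> 1 - d"
    unfolding e1 using a by (intro conjI cvx_le cvx_ge) auto
qed

lemma corners: "pA \<in> R" "pB \<in> R" "pC \<in> R" "pD \<in> R"
  using d_pos d_le by (auto simp: R_def pA_def pB_def pC_def pD_def)

lemma F_nz: "p \<in> R \<Longrightarrow> F p \<noteq> 0"
proof -
  assume "p \<in> R"
  hence "0 < snd p - fst p" "snd p - fst p < 1" using d_pos by (auto simp: R_def)
  thus "F p \<noteq> 0" using gdiff unfolding F_def by auto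
qed

lemma F_cont: "continuous_on S F"
  unfolding F_def by (intro continuous_intros continuous_on_compose2[OF g_cont]) auto

lemma seg_R: "p \<in> R \<Longrightarrow> q \<in> R \<Longrightarrow> closed_segment p q \<subseteq> R"
  using closed_segment_subset R_convex by blast

lemma lp_image: "path_image lp \<subseteq> R"
  unfolding lp_def using seg_R corners by (simp add: path_image_join)

lemma lp_path: "path lp" "pathfinish lp = pathstart lp"
  unfolding lp_def by simp_all

lemma W_lp: "winding_number (F \<circ> lp) 0 = 0"
proof -
  have "homotopic_loops R lp (linepath pA pA)"
  proof (rule homotopic_loops_linear)
    show "path lp" "pathfinish lp = pathstart lp" using lp_path by auto
    fix t :: real assume "t \<in> {0..1}"
    hence "lp t \<in> R" using lp_image by (auto simp: path_image_def)
    thus "closed_segment (lp t) (linepath pA pA t) \<subseteq> R" using seg_R corners by simp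
  qed auto
  hence "homotopic_loops (-{0}) (F \<circ> lp) (F \<circ> linepath pA pA)"
    by (rule homotopic_loops_continuous_image) (use F_cont F_nz in auto)
  hence "winding_number (F \<circ> lp) 0 = winding_number (F \<circ> linepath pA pA) 0"
    by (rule winding_number_homotopic_loops)
  also have "\<dots> = 0" by (rule winding_number_constI[of "F pA"]) (use F_nz corners in auto)
  finally show ?thesis .
qed

lemma nz_img: "p \<in> R \<Longrightarrow> q \<in> R \<Longrightarrow> 0 \<notin> path_image (F \<circ> linepath p q)"
proof -
  assume "p \<in> R" "q \<in> R"
  hence "closed_segment p q \<subseteq> R" by (rule seg_R)
  thus ?thesis using F_nz by (auto simp: path_image_compose)
qed

lemma path_F: "path (F \<circ> linepath p q)"
  by (intro path_continuous_image path_linepath F_cont)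

lemma W_split: "winding_number (F \<circ> lp) 0 =
   winding_number (F \<circ> linepath pA pB) 0 + winding_number (F \<circ> linepath pB pC) 0 +
   winding_number (F \<circ> linepath pC pD) 0 + winding_number (F \<circ> linepath pD pA) 0"
  unfolding lp_def path_compose_join using corners
  by (simp add: winding_number_join path_F nz_img not_in_path_image_join path_image_join
       pathstart_compose pathfinish_compose)

end


lemma sgn_real_int: "sgn (real_of_int t) = real_of_int (sgn t)" by (simp add: sgn_if)

context opoly_low begin

lemma F1: "F \<circ> linepath pA pB = Q"
proof
  fix l
  have "linepath pA pB l = (b, b + d + l * (1 - 2 * d))"
    by (simp add: linepath_def pA_def pB_def algebra_simps)
  thus "(F \<circ> linepath pA pB) l = Q l" by (simp add: F_def Q_def)
qed

lemma F3: "F \<circ> linepath pC pD = (\<lambda>l. - Q l)"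
proof
  fix l
  have "linepath pC pD l = (b + d + l * (1 - 2 * d), b + 1)"
    by (simp add: linepath_def pC_def pD_def algebra_simps)
  moreover have "g (b + 1) = g b" using g_per by simp
  ultimately show "(F \<circ> linepath pC pD) l = - Q l" by (simp add: F_def Q_def)
qed

lemma F4: "F \<circ> linepath pD pA = reversepath Dp"
proof
  fix l
  have "linepath pD pA l = (b + (1 - l) * (1 - d), b + (1 - l) * (1 - d) + d)"
    by (simp add: linepath_def pD_def pA_def algebra_simps)
  thus "(F \<circ> linepath pD pA) l = reversepath Dp l" by (simp add: F_def Dp_def reversepath_def)
qed

lemma F2: "l \<in> {0..1} \<Longrightarrow> (F \<circ> linepath pB pC) l = (-1) * linepath (e (j0-1)) (e j0) l"
proof -
  assume l: "l \<in> {0..1}"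
  have "linepath pB pC l = (b + l * d, (b - d + l * d) + 1)"
    by (simp add: linepath_def pB_def pC_def algebra_simps)
  moreover have "g ((b - d + l * d) + 1) = g (b - d + l * d)" by (rule g_per)
  moreover have "g (b - d + l * d) = V (j0 - 1) + of_real l * e (j0 - 1)"
    by (rule gs) (use l n_pos in \<open>auto simp: b_def d_def N_def field_simps\<close>)
  moreover have "g (b + l * d) = V j0 + of_real l * e j0"
    by (rule gs) (use l n_pos in \<open>auto simp: b_def d_def N_def field_simps\<close>)
  moreover have "V j0 = V (j0 - 1) + e (j0 - 1)" by (simp add: e_def)
  ultimately show ?thesis
    by (simp add: F_def linepath_def scaleR_conv_of_real algebra_simps)
qed

lemma W2: "Re (winding_number (F \<circ> linepath pB pC) 0) = of_int (tsg j0) / 4"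
proof -
  have "Re (winding_number (F \<circ> linepath pB pC) 0) = sgn (Im (cnj (e (j0-1)) * e j0)) / 4"
    by (rule wn_perp[where c = "-1"]) (use e_nz perp F2 in auto)
  thus ?thesis unfolding cross_turn by (simp add: tsg_def sgn_real_int)
qed

lemma Dp_cont: "continuous_on {0..1} Dp"
  unfolding Dp_def by (intro continuous_intros continuous_on_compose2[OF g_cont]) auto

lemma Dp_path: "path Dp" using Dp_cont by (simp add: path_def)

lemma Dp_nz: "0 \<notin> path_image Dp"
proof
  assume "0 \<in> path_image Dp"
  then obtain l where "l \<in> {0..1}" "Dp l = 0" by (auto simp: path_image_def)
  hence "g (b + l * (1 - d) + d) = g (b + l * (1 - d))" by (simp add: Dp_def)
  moreover have "g (b + l * (1 - d) + d) \<noteq> g (b + l * (1 - d))" using d_pos d_le by (intro gdiff) auto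
  ultimately show False by simp
qed

definition "M = real n - 1"

lemma M_pos: "M \<ge> 3" using N_ge4 by (simp add: M_def N_def)

lemma Dp_sub: assumes "x \<in> {0..1}"
  shows "subpath (of_nat i / M) (of_nat (i+1) / M) Dp x = linepath (e (j0 + int i)) (e (j0 + int i + 1)) x"
proof -
  have Md: "(1 - d) / M = d" using M_pos N_ge4 by (simp add: M_def d_def N_def field_simps)
  have arg: "(of_nat (i+1) / M - of_nat i / M) * x + of_nat i / M = (x + of_nat i) / M"
    using M_pos by (simp add: field_simps)
  have a1: "b + ((x + of_nat i) / M) * (1 - d) = (of_int (j0 + int i) + x) / real n"
  proof -
    have "((x + of_nat i) / M) * (1 - d) = (x + of_nat i) * ((1 - d) / M)" by simp
    also have "\<dots> = (x + of_nat i) * d" using Md by simp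
    finally show ?thesis using n_pos by (simp add: b_def d_def N_def field_simps)
  qed
  have a2: "b + ((x + of_nat i) / M) * (1 - d) + d = (of_int (j0 + int i + 1) + x) / real n"
    using a1 n_pos by (simp add: d_def N_def field_simps)
  have "subpath (of_nat i / M) (of_nat (i+1) / M) Dp x = Dp ((x + of_nat i) / M)"
    by (simp only: subpath_def arg)
  also have "\<dots> = (V (j0 + int i + 1) + of_real x * e (j0 + int i + 1)) - (V (j0 + int i) + of_real x * e (j0 + int i))"
  proof -
    have "g (b + ((x + of_nat i) / M) * (1 - d) + d) = V (j0 + int i + 1) + of_real x * e (j0 + int i + 1)"
      by (rule gs[OF _ _ a2]) (use assms in auto)
    moreover have "g (b + ((x + of_nat i) / M) * (1 - d)) = V (j0 + int i) + of_real x * e (j0 + int i)"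
      by (rule gs[OF _ _ a1]) (use assms in auto)
    ultimately show ?thesis unfolding Dp_def by simp
  qed
  also have "\<dots> = linepath (e (j0 + int i)) (e (j0 + int i + 1)) x"
    by (simp add: linepath_def e_def scaleR_conv_of_real algebra_simps)
  finally show ?thesis .
qed

lemma W_Dp_part: "m \<le> n - 1 \<Longrightarrow>
  Re (winding_number (subpath 0 (of_nat m / M) Dp) 0) = (\<Sum>i<m. of_int (tsg (j0 + int i + 1))) / 4"
proof (induction m)
  case 0
  have "Dp 0 \<noteq> 0" using Dp_nz by (auto simp: path_image_def)
  thus ?case by simp
next
  case (Suc m)
  have mM: "of_nat m / M \<in> {0..1}" "of_nat (Suc m) / M \<in> {0..1}" using Suc.prems M_pos n_ge4
    by (auto simp: M_def divide_simps)
  have "winding_number (subpath 0 (of_nat m / M) Dp) 0 + winding_number (subpath (of_nat m / M) (of_nat (Suc m) / M) Dp) 0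
      = winding_number (subpath 0 (of_nat (Suc m) / M) Dp) 0"
    by (rule winding_number_subpath_combine) (use Dp_path Dp_nz mM in auto)
  hence c: "Re (winding_number (subpath 0 (of_nat (Suc m) / M) Dp) 0) = Re (winding_number (subpath 0 (of_nat m / M) Dp) 0) + Re (winding_number (subpath (of_nat m / M) (of_nat (Suc m) / M) Dp) 0)"
    by (metis plus_complex.sel(1))
  moreover have "Re (winding_number (subpath (of_nat m / M) (of_nat (Suc m) / M) Dp) 0) = of_int (tsg (j0 + int m + 1)) / 4"
  proof -
    have "Re (winding_number (subpath (of_nat m / M) (of_nat (Suc m) / M) Dp) 0)
          = sgn (Im (cnj (e (j0 + int m)) * e (j0 + int m + 1))) / 4"
      by (rule wn_perp[where c = 1]) (use e_nz perp[of "j0 + int m + 1"] Dp_sub[of _ m] in auto)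
    moreover have ct: "Im (cnj (e (j0 + int m)) * e (j0 + int m + 1)) = of_int (turn P (j0 + int m + 1))"
      using cross_turn[of "j0 + int m + 1"] by simp
    ultimately show ?thesis by (simp only: ct tsg_def sgn_real_int)
  qed
  moreover have "m \<le> n - 1" using Suc.prems by simp
  ultimately show ?case using Suc.IH c by (simp add: add_divide_distrib)
qed

lemma W_Dp: "Re (winding_number Dp 0) = (\<Sum>i<n-1. of_int (tsg (j0 + int i + 1))) / 4"
proof -
  have e: "of_nat (n - 1) / M = 1" using M_pos n_ge4 by (simp add: M_def of_nat_diff)
  have "Re (winding_number (subpath 0 (of_nat (n - 1) / M) Dp) 0) = (\<Sum>i<n-1. of_int (tsg (j0 + int i + 1))) / 4"
    by (rule W_Dp_part) simp
  thus ?thesis unfolding e subpath_trivial .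
qed

lemma hopf_shift: "(\<Sum>i<n. tsg (j0 + int i)) = 4 * tsg j0"
proof -
  have "winding_number (F \<circ> lp) 0 = winding_number Q 0 + winding_number (F \<circ> linepath pB pC) 0 +
     winding_number (\<lambda>l. - Q l) 0 + winding_number (reversepath Dp) 0"
    using W_split unfolding F1 F3 F4 .
  hence "Re (winding_number (F \<circ> lp) 0) = Re (winding_number Q 0) + Re (winding_number (F \<circ> linepath pB pC) 0) +
     Re (winding_number (\<lambda>l. - Q l) 0) + Re (winding_number (reversepath Dp) 0)"
    by (simp only: plus_complex.sel)
  moreover have "Re (winding_number (reversepath Dp) 0) = - Re (winding_number Dp 0)"
    using winding_number_reversepath[OF Dp_path Dp_nz] by simp
  moreover have "Re (winding_number (F \<circ> lp) 0) = 0" using W_lp by simp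
  ultimately have "0 = 3 * (of_int (tsg j0) / 4) - (\<Sum>i<n-1. of_int (tsg (j0 + int i + 1))) / (4::real)"
    using WQ W2 WnQ W_Dp by linarith
  hence "(\<Sum>i<n-1. of_int (tsg (j0 + int i + 1))) = (3 * of_int (tsg j0) :: real)" by simp
  hence s1: "(\<Sum>i<n-1. tsg (j0 + int i + 1)) = 3 * tsg j0" by (simp flip: of_int_sum)
  have "(\<Sum>i<n. tsg (j0 + int i)) = (\<Sum>i<Suc (n-1). tsg (j0 + int i))" using n_pos by simp
  also have "\<dots> = tsg j0 + (\<Sum>i<n-1. tsg (j0 + int (Suc i)))" by (subst sum.lessThan_Suc_shift) simp
  also have "\<dots> = 4 * tsg j0" using s1 by (simp add: ac_simps)
  finally show ?thesis .
qed

end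


context opoly begin

lemma g_path: "path g" unfolding path_def by (rule continuous_on_subset[OF g_cont]) simp
lemma g_loop: "pathfinish g = pathstart g" using g_per[of 0] by (simp add: pathfinish_def pathstart_def)

lemma g_simple: "simple_path g"
  unfolding simple_path_def loop_free_def
proof (intro conjI g_path ballI impI)
  fix x y :: real assume xy: "x \<in> {0..1}" "y \<in> {0..1}" "g x = g y"
  then obtain m :: int where m: "y - x = of_int m" using g_inj by blast
  have "(-1::real) \<le> of_int m" "of_int m \<le> (1::real)" using xy m by auto
  hence "-1 \<le> m" "m \<le> 1" by linarith+
  hence "m = -1 \<or> m = 0 \<or> m = 1" by auto
  thus "x = y \<or> x = 0 \<and> y = 1 \<or> x = 1 \<and> y = 0" using m xy by auto
qed

lemma g_grid: "(\<exists>m::int. Im (g t) = of_int m) \<or> (\<exists>m::int. Re (g t) = of_int m)"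
proof -
  obtain k l where kl: "g t = V k + of_real l * e k" using g_form by blast
  show ?thesis using hor_ver[of k]
  proof
    assume "hor k" hence "Im (g t) = of_int (Y k)" unfolding kl by (simp add: e_def hor_def)
    thus ?thesis by blast
  next
    assume "ver k" hence "Re (g t) = of_int (X k)" unfolding kl by (simp add: e_def ver_def)
    thus ?thesis by blast
  qed
qed

definition cc :: "int \<Rightarrow> int \<Rightarrow> complex" where
  "cc a b = Complex (of_int a + 1/2) (of_int b + 1/2)"

lemma half_not_int: "(of_int a :: real) + 1/2 \<noteq> of_int m"
proof
  assume "(of_int a :: real) + 1/2 = of_int m"
  hence "2 * of_int a + 1 = (2 * of_int m :: real)" by linarith
  hence "2 * a + 1 = 2 * m" by linarith
  thus False by presburger
qed

lemma cc_not: "g t \<noteq> cc a b"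
  using g_grid[of t] half_not_int by (auto simp: cc_def)

lemma cc_not_img: "cc a b \<notin> path_image g"
  using cc_not unfolding path_image_def by (metis imageE)

definition W :: "int \<Rightarrow> int \<Rightarrow> real" where "W a b = Re (winding_number g (cc a b))"

lemma wn_int: "winding_number g (cc a b) \<in> \<int>"
  using integer_winding_number[OF g_path g_loop cc_not_img] .

lemma W_cases: "winding_number g (cc a b) = of_real (W a b) \<and> (W a b = -1 \<or> W a b = 0 \<or> W a b = 1)"
  using simple_closed_path_winding_number_cases[OF g_simple g_loop cc_not_img, of a b]
  by (auto simp: W_def)

lemma W_same: assumes "W a b \<noteq> 0" "W a' b' \<noteq> 0" shows "W a b = W a' b'"
proof -
  have ins: "cc x y \<in> inside (path_image g)" if "W x y \<noteq> 0" for x y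
  proof (rule ccontr)
    assume "cc x y \<notin> inside (path_image g)"
    hence "cc x y \<in> outside (path_image g)" using cc_not_img inside_Un_outside by blast
    hence "winding_number g (cc x y) = 0" by (rule winding_number_zero_in_outside[OF g_path g_loop])
    thus False using that by (simp add: W_def)
  qed
  show ?thesis
    using simple_closed_path_winding_number_inside[OF g_simple] ins[OF assms(1)] ins[OF assms(2)]
    by (metis W_def)
qed

end


lemma seg_pts: assumes "w \<in> closed_segment p q"
  shows "\<exists>u. 0 \<le> u \<and> u \<le> 1 \<and> Re w = (1 - u) * Re p + u * Re q \<and> Im w = (1 - u) * Im p + u * Im q"
  using assms by (auto simp: closed_segment_def scaleR_conv_of_real)

context opoly begin

definition cov :: "int \<Rightarrow> int \<Rightarrow> bool" where
  "cov k b \<longleftrightarrow> ver k \<and> min (Y k) (Y (k+1)) \<le> b \<and> b < max (Y k) (Y (k+1))"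

definition sg :: "int \<Rightarrow> int" where "sg k = sgn (Y (k+1) - Y k)"

lemma cov_pt: assumes "cov k b"
  shows "\<exists>l. 0 < l \<and> l < 1 \<and> V k + of_real l * e k = Complex (of_int (X k)) (of_int b + 1/2)"
proof -
  have v: "X (k+1) = X k" "Y (k+1) \<noteq> Y k" using assms by (auto simp: cov_def ver_def)
  define l where "l = (of_int b + 1/2 - of_int (Y k)) / (of_int (Y (k+1)) - of_int (Y k) :: real)"
  have dnz: "(of_int (Y (k+1)) - of_int (Y k) :: real) \<noteq> 0" using v by simp
  have "0 < l \<and> l < 1"
  proof (cases "Y k < Y (k+1)")
    case True
    hence "Y k \<le> b" "b < Y (k+1)" using assms by (auto simp: cov_def)
    hence "(of_int (Y k)::real) \<le> of_int b" "of_int b + 1 \<le> (of_int (Y (k+1))::real)" by linarith+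
    thus ?thesis using True unfolding l_def by (auto simp: divide_simps)
  next
    case False
    hence F: "Y (k+1) < Y k" using v by linarith
    hence "Y (k+1) \<le> b" "b < Y k" using assms by (auto simp: cov_def)
    hence "(of_int (Y (k+1))::real) \<le> of_int b" "of_int b + 1 \<le> (of_int (Y k)::real)" by linarith+
    thus ?thesis using F unfolding l_def by (auto simp: divide_simps)
  qed
  moreover have "V k + of_real l * e k = Complex (of_int (X k)) (of_int b + 1/2)"
    using dnz v by (simp add: complex_eq_iff e_def l_def)
  ultimately show ?thesis by blast
qed

lemma sg_cases: "ver k \<Longrightarrow> (sg k = 1 \<and> Y k < Y (k+1)) \<or> (sg k = -1 \<and> Y (k+1) < Y k)"
  by (auto simp: sg_def ver_def sgn_if)

end


context opoly begin

lemma jump: assumes cv: "cov k b" shows "W (X k - 1) b - W (X k) b = of_int (sg k)"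
proof -
  define a where "a = X k"
  define p0 where "p0 = V k"
  define p1 where "p1 = V (k+1)"
  define c' where "c' = Complex (of_int a - 1) (of_int b + 1/2)"
  define mp where "mp = Complex (of_int a) (of_int b + 1/2)"
  define zL where "zL = cc (a - 1) b"
  define zR where "zR = cc a b"
  have ver: "ver k" using cv by (simp add: cov_def)
  have Rp: "Re p0 = of_int a" "Re p1 = of_int a" using ver by (auto simp: p0_def p1_def a_def ver_def)
  have Ip: "Im p0 = of_int (Y k)" "Im p1 = of_int (Y (k+1))" by (auto simp: p0_def p1_def)
  have hk0: "(of_int (Y k) :: real) \<noteq> of_int b + 1/2" "(of_int (Y (k+1)) :: real) \<noteq> of_int b + 1/2"
    using half_not_int by metis+
  have zLc: "Re zL = of_int a - 1/2" "Im zL = of_int b + 1/2" by (simp_all add: zL_def cc_def)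
  have zRc: "Re zR = of_int a + 1/2" "Im zR = of_int b + 1/2" by (simp_all add: zR_def cc_def)
  obtain lm where lm: "0 < lm" "lm < 1" "V k + of_real lm * e k = mp"
    using cov_pt[OF cv] by (auto simp: mp_def a_def)
  define \<kappa> where "\<kappa> = k mod int n"
  define s0 where "s0 = of_int \<kappa> / real n"
  define \<delta> where "\<delta> = 1 / real n"
  have kap: "0 \<le> \<kappa>" "\<kappa> < int n" "\<kappa> mod int n = k mod int n" using n_pos by (auto simp: \<kappa>_def)
  have s0: "0 \<le> s0" "s0 < 1" using kap n_pos by (auto simp: s0_def divide_simps)
  have dl: "0 < \<delta>" "\<delta> \<le> 1/4" using n_ge4 by (auto simp: \<delta>_def divide_simps)
  have gk: "g (s0 + \<delta> * x) = V k + of_real x * e k" if "0 \<le> x" "x \<le> 1" for x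
  proof -
    have "g (s0 + \<delta> * x) = V \<kappa> + of_real x * e \<kappa>"
      by (rule gs) (use that n_pos in \<open>auto simp: s0_def \<delta>_def field_simps\<close>)
    thus ?thesis using V_cong[OF kap(3)] e_cong[OF kap(3)] by simp
  qed
  define hh where "hh t = g (s0 + t)" for t
  have hh_path: "path hh" unfolding hh_def path_def
    by (intro continuous_intros continuous_on_compose2[OF g_cont]) auto
  have hh_not: "cc x y \<notin> path_image hh" for x y using cc_not[symmetric] by (auto simp: path_image_def hh_def)
  have hh_sub_not: "cc x y \<notin> path_image (subpath u v hh)" if "u \<in> {0..1}" "v \<in> {0..1}" for x y u v
    using hh_not path_image_subpath_subset[OF that] by blast
  have W1: "winding_number g (cc x y) = winding_number hh (cc x y)" for x y
  proof -
    have "winding_number (shiftpath s0 g) (cc x y) = winding_number g (cc x y)"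
      by (rule winding_number_shiftpath[OF g_path cc_not_img g_loop]) (use s0 in auto)
    moreover have "winding_number (shiftpath s0 g) (cc x y) = winding_number hh (cc x y)"
      by (rule winding_number_cong) (use g_per[of "s0 + _ - 1"] in \<open>auto simp: shiftpath_def hh_def\<close>)
    ultimately show ?thesis by simp
  qed
  define \<rho> where "\<rho> = subpath \<delta> 1 hh"
  have W2: "winding_number hh (cc x y) = winding_number (linepath p0 p1) (cc x y) + winding_number \<rho> (cc x y)" for x y
  proof -
    have "winding_number (subpath 0 \<delta> hh) (cc x y) + winding_number (subpath \<delta> 1 hh) (cc x y) = winding_number (subpath 0 1 hh) (cc x y)"
      by (rule winding_number_subpath_combine[OF hh_path hh_not]) (use dl in auto)
    moreover have "winding_number (subpath 0 \<delta> hh) (cc x y) = winding_number (linepath p0 p1) (cc x y)"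
    proof (rule winding_number_cong)
      fix t :: real assume "0 \<le> t" "t \<le> 1"
      thus "subpath 0 \<delta> hh t = linepath p0 p1 t"
        using gk[of t] by (simp add: subpath_def hh_def linepath_def p0_def p1_def e_def scaleR_conv_of_real algebra_simps)
    qed
    ultimately show ?thesis by (simp add: \<rho>_def)
  qed
  have rho_start: "pathstart \<rho> = p1"
    using gk[of 1] by (simp add: \<rho>_def pathstart_def subpath_def hh_def p1_def e_def)
  have rho_finish: "pathfinish \<rho> = p0"
    using gk[of 0] g_per[of s0] by (simp add: \<rho>_def pathfinish_def subpath_def hh_def p0_def add.commute)
  have rho_path: "path \<rho>" unfolding \<rho>_def by (rule path_subpath[OF hh_path]) (use dl in auto)
  define S where "S = closed_segment zL zR"
  have Spt: "Im w = of_int b + 1/2 \<and> of_int a - 1/2 \<le> Re w \<and> Re w \<le> of_int a + 1/2" if wS: "w \<in> S" for w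
  proof -
    obtain u where u: "0 \<le> u" "u \<le> 1" "Re w = (1 - u) * Re zL + u * Re zR" "Im w = (1 - u) * Im zL + u * Im zR"
      using seg_pts[OF wS[unfolded S_def]] by blast
    have "Re w = of_int a - 1/2 + u" using u(3) unfolding zLc zRc by (simp add: field_simps)
    moreover have "Im w = of_int b + 1/2" using u(4) unfolding zLc zRc by (simp add: field_simps)
    ultimately show ?thesis using u(1,2) by simp
  qed
  have S_rho: "w \<notin> path_image \<rho>" if wS: "w \<in> S" for w
  proof
    assume "w \<in> path_image \<rho>"
    then obtain x where x: "x \<in> {0..1}" "w = g (s0 + ((1 - \<delta>) * x + \<delta>))"
      by (auto simp: \<rho>_def path_image_def subpath_def hh_def)
    define \<tau> where "\<tau> = s0 + ((1 - \<delta>) * x + \<delta>)"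
    have Imw: "Im (g \<tau>) = of_int b + 1/2" using Spt[OF wS] x by (simp add: \<tau>_def)
    have "\<not> (\<exists>m::int. Im (g \<tau>) = of_int m)" using Imw half_not_int by metis
    then obtain m :: int where m: "Re (g \<tau>) = of_int m" using g_grid by blast
    have "of_int a - 1/2 \<le> (of_int m :: real)" "(of_int m :: real) \<le> of_int a + 1/2"
      using Spt[OF wS] x m by (auto simp: \<tau>_def)
    hence "m = a" by linarith
    hence "g \<tau> = mp" using m Imw by (simp add: mp_def complex_eq_iff)
    also have "mp = g (s0 + \<delta> * lm)" using gk[of lm] lm by simp
    finally obtain q :: int where q: "(s0 + \<delta> * lm) - \<tau> = of_int q" using g_inj by blast
    have "(s0 + \<delta> * lm) - \<tau> = - (\<delta> * (1 - lm) + (1 - \<delta>) * x)" by (simp add: \<tau>_def algebra_simps)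
    moreover have "0 < \<delta> * (1 - lm) + (1 - \<delta>) * x" using dl lm x by (auto intro: add_pos_nonneg)
    moreover have "\<delta> * (1 - lm) + (1 - \<delta>) * x < 1"
    proof -
      have "(1 - \<delta>) * x \<le> 1 - \<delta>" using x dl by (simp add: mult_left_le)
      moreover have "\<delta> * (1 - lm) < \<delta>" using dl lm by simp
      ultimately show ?thesis by linarith
    qed
    ultimately have "(-1::real) < of_int q" "(of_int q::real) < 0" using q by linarith+
    hence "-1 < q" "q < 0" by simp_all
    thus False by linarith
  qed
  have S_seg1: "w \<notin> closed_segment p0 c'" if wS: "w \<in> S" for w
  proof
    assume "w \<in> closed_segment p0 c'"
    then obtain u where u: "0 \<le> u" "u \<le> 1" "Re w = (1 - u) * Re p0 + u * Re c'" "Im w = (1 - u) * Im p0 + u * Im c'"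
      using seg_pts by blast
    have "(1 - u) * (of_int (Y k) - (of_int b + 1/2)) = 0" using u(4) Spt[OF wS] Ip by (simp add: c'_def field_simps)
    hence "u = 1" using hk0 by simp
    thus False using u(3) Spt[OF wS] Rp by (simp add: c'_def)
  qed
  have S_seg2: "w \<notin> closed_segment c' p1" if wS: "w \<in> S" for w
  proof
    assume "w \<in> closed_segment c' p1"
    then obtain u where u: "0 \<le> u" "u \<le> 1" "Re w = (1 - u) * Re c' + u * Re p1" "Im w = (1 - u) * Im c' + u * Im p1"
      using seg_pts by blast
    have "u * (of_int (Y (k+1)) - (of_int b + 1/2)) = 0" using u(4) Spt[OF wS] Ip by (simp add: c'_def field_simps)
    hence "u = 0" using hk0 by simp
    thus False using u(3) Spt[OF wS] Rp by (simp add: c'_def)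
  qed
  define det where "det = linepath p0 c' +++ linepath c' p1"
  define G where "G = \<rho> +++ det"
  have G_path: "path G" "pathfinish G = pathstart G"
    using rho_path rho_start rho_finish by (auto simp: G_def det_def)
  have G_img: "path_image G = path_image \<rho> \<union> closed_segment p0 c' \<union> closed_segment c' p1"
    using rho_finish by (simp add: G_def det_def path_image_join Un_assoc)
  have zS: "zL \<in> S" "zR \<in> S" by (auto simp: S_def)
  have GW: "winding_number G zL = winding_number G zR"
    by (rule winding_number_eq[OF G_path zS]) (use S_rho S_seg1 S_seg2 G_img in \<open>auto simp: S_def\<close>)
  have notL: "z \<notin> closed_segment p0 p1" if "z \<in> S" "Re z \<noteq> of_int a" for z
    using that seg_pts[of z p0 p1] Rp by (auto simp: algebra_simps)
  have zLa: "Re zL \<noteq> of_int a" "Re zR \<noteq> of_int a" using zLc zRc by auto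
  define T where "T = linepath p0 p1 +++ linepath p1 c' +++ linepath c' p0"
  have dec: "winding_number g z = winding_number T z + winding_number G z" if z: "z = zL \<or> z = zR" for z
  proof -
    have zc: "\<exists>x y. z = cc x y" using z by (auto simp: zL_def zR_def)
    have zS': "z \<in> S" using z zS by auto
    have n1: "z \<notin> closed_segment p0 c'" "z \<notin> closed_segment c' p1" "z \<notin> path_image \<rho>"
      using S_seg1[OF zS'] S_seg2[OF zS'] S_rho[OF zS'] by auto
    have n1': "z \<notin> closed_segment c' p0" "z \<notin> closed_segment p1 c'" using n1 by (auto simp: closed_segment_commute)
    have n2: "z \<notin> closed_segment p0 p1" using notL[OF zS'] z zLa by auto
    have "winding_number g z = winding_number (linepath p0 p1) z + winding_number \<rho> z"
      using zc W1 W2 by auto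
    moreover have "winding_number G z = winding_number \<rho> z + winding_number (linepath p0 c') z + winding_number (linepath c' p1) z"
      unfolding G_def det_def using rho_path rho_finish n1
      by (simp add: winding_number_join path_image_join)
    moreover have "winding_number T z = winding_number (linepath p0 p1) z + winding_number (linepath p1 c') z + winding_number (linepath c' p0) z"
      unfolding T_def using n1' n2 by (simp add: winding_number_join path_image_join)
    moreover have "winding_number (linepath p1 c') z = - winding_number (linepath c' p1) z"
      using winding_number_reversepath[of "linepath c' p1" z] n1 by simp
    moreover have "winding_number (linepath c' p0) z = - winding_number (linepath p0 c') z"
      using winding_number_reversepath[of "linepath p0 c'" z] n1 by simp
    ultimately show ?thesis by simp
  qed
  have TR: "winding_number T zR = 0"
  proof (rule winding_number_zero_outside[where s = "{w. Re w \<le> of_int a}"])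
    show "path T" "pathfinish T = pathstart T" by (auto simp: T_def)
    show "convex {w. Re w \<le> of_int a}" by (rule convex_halfspace_Re_le)
    show "zR \<notin> {w. Re w \<le> of_int a}" using zRc by simp
    have "p0 \<in> {w. Re w \<le> of_int a}" "p1 \<in> {w. Re w \<le> of_int a}" "c' \<in> {w. Re w \<le> of_int a}"
      using Rp by (auto simp: c'_def)
    thus "path_image T \<subseteq> {w. Re w \<le> of_int a}"
      unfolding T_def using closed_segment_subset[OF _ _ convex_halfspace_Re_le]
      by (simp add: path_image_join)
  qed
  have TL: "winding_number T zL = of_int (sg k)"
  proof -
    have hull: "zL \<in> convex hull {p0, p1, c'}"
    proof -
      have "mp \<in> closed_segment p0 p1"
        unfolding closed_segment_def using lm
        by (auto intro!: exI[of _ lm] simp: p0_def p1_def e_def scaleR_conv_of_real algebra_simps)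
      hence "mp \<in> convex hull {p0, p1, c'}"
        by (metis segment_convex_hull hull_mono insert_mono subset_insertI subsetD insert_commute)
      moreover have "c' \<in> convex hull {p0, p1, c'}" by (simp add: hull_inc)
      ultimately have "closed_segment mp c' \<subseteq> convex hull {p0, p1, c'}"
        by (intro closed_segment_subset) auto
      moreover have "zL = midpoint mp c'"
        by (simp add: zL_def mp_def c'_def cc_def midpoint_def complex_eq_iff)
      ultimately show ?thesis using midpoint_in_closed_segment by blast
    qed
    have zSL: "zL \<in> S" by (simp add: S_def)
    have int: "zL \<in> interior (convex hull {p0, p1, c'})"
      unfolding interior_of_triangle[OF DIM_complex] using hull S_seg1[OF zSL] S_seg2[OF zSL] notL[OF zSL] zLa
      by (auto simp: closed_segment_commute)
    have "winding_number T zL = (if 0 < Im ((p1 - p0) * cnj (p1 - zL)) then 1 else -1)"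
      unfolding T_def by (rule winding_number_triangle[OF int])
    moreover have "Im ((p1 - p0) * cnj (p1 - zL)) = (of_int (Y (k+1)) - of_int (Y k)) / 2"
    proof -
      have "p1 - p0 = Complex 0 (of_int (Y (k+1)) - of_int (Y k))" using Rp Ip by (simp add: complex_eq_iff)
      moreover have "p1 - zL = Complex (1/2) (of_int (Y (k+1)) - (of_int b + 1/2))"
        using Rp Ip by (simp add: complex_eq_iff zL_def cc_def)
      ultimately show ?thesis by simp
    qed
    ultimately show ?thesis using sg_cases[OF ver] by auto
  qed
  have "winding_number g zL - winding_number g zR = of_int (sg k)"
    using dec[of zL] dec[of zR] TL TR GW by simp
  hence "Re (winding_number g zL) - Re (winding_number g zR) = of_int (sg k)"
    by (metis minus_complex.sel(1) Re_complex_of_real of_real_of_int_eq)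
  thus ?thesis by (simp add: W_def zL_def zR_def a_def)
qed

end


context opoly begin

definition "xmin = Min (X ` {0..<int n})"
definition "xmax = Max (X ` {0..<int n})"
definition "ymin = Min (Y ` {0..<int n})"
definition "ymax = Max (Y ` {0..<int n})"

lemma X_bnd: "xmin \<le> X k \<and> X k \<le> xmax"
proof -
  have "k mod int n \<in> {0..<int n}" using n_pos by simp
  moreover have "X k = X (k mod int n)" by (rule X_cong) simp
  ultimately show ?thesis unfolding xmin_def xmax_def by auto
qed

lemma Y_bnd: "ymin \<le> Y k \<and> Y k \<le> ymax"
proof -
  have "k mod int n \<in> {0..<int n}" using n_pos by simp
  moreover have "Y k = Y (k mod int n)" by (rule Y_cong) simp
  ultimately show ?thesis unfolding ymin_def ymax_def by auto
qed

lemma Re_g_bnd: "of_int xmin \<le> Re (g t) \<and> Re (g t) \<le> of_int xmax"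
proof -
  obtain k l where kl: "0 \<le> l" "l < 1" "g t = V k + of_real l * e k" using g_form by blast
  have "Re (g t) = (1 - l) * of_int (X k) + l * of_int (X (k+1))" unfolding kl(3) by (simp add: e_def algebra_simps)
  moreover have "of_int xmin \<le> (of_int (X k) :: real)" "of_int xmin \<le> (of_int (X (k+1)) :: real)"
    "(of_int (X k) :: real) \<le> of_int xmax" "(of_int (X (k+1)) :: real) \<le> of_int xmax"
    using X_bnd by simp_all
  ultimately show ?thesis using kl(1,2) by (auto intro!: cvx_le cvx_ge)
qed

lemma far_left: "a < xmin \<Longrightarrow> W a b = 0"
proof -
  assume a: "a < xmin"
  have "winding_number g (cc a b) = 0"
  proof (rule winding_number_zero_outside[OF g_path convex_halfspace_Re_ge g_loop])
    show "cc a b \<notin> {x. of_int xmin \<le> Re x}" using a by (simp add: cc_def)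
    show "path_image g \<subseteq> {x. of_int xmin \<le> Re x}" using Re_g_bnd by (auto simp: path_image_def)
  qed
  thus ?thesis by (simp add: W_def)
qed

lemma far_right: "xmax \<le> a \<Longrightarrow> W a b = 0"
proof -
  assume a: "xmax \<le> a"
  have "winding_number g (cc a b) = 0"
  proof (rule winding_number_zero_outside[OF g_path convex_halfspace_Re_le g_loop])
    show "cc a b \<notin> {x. Re x \<le> of_int xmax}" using a by (simp add: cc_def)
    show "path_image g \<subseteq> {x. Re x \<le> of_int xmax}" using Re_g_bnd by (auto simp: path_image_def)
  qed
  thus ?thesis by (simp add: W_def)
qed

lemma no_edge: assumes "\<And>k. cov k b \<Longrightarrow> X k \<noteq> a" shows "W (a - 1) b = W a b"
proof -
  define S where "S = closed_segment (cc (a - 1) b) (cc a b)"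
  have "S \<inter> path_image g = {}"
  proof (rule ccontr)
    assume "S \<inter> path_image g \<noteq> {}"
    then obtain w t where w: "w \<in> S" "w = g t" by (auto simp: path_image_def)
    obtain u where u: "0 \<le> u" "u \<le> 1" "Re w = (1 - u) * Re (cc (a - 1) b) + u * Re (cc a b)"
       "Im w = (1 - u) * Im (cc (a - 1) b) + u * Im (cc a b)"
      using seg_pts[OF w(1)[unfolded S_def]] by blast
    have Rw: "Re w = of_int a - 1/2 + u" using u(3) by (simp add: cc_def field_simps)
    have Iw: "Im w = of_int b + 1/2" using u(4) by (simp add: cc_def field_simps)
    obtain k l where kl: "0 \<le> l" "l < 1" "g t = V k + of_real l * e k" using g_form by blast
    show False using hor_ver[of k]
    proof
      assume "hor k"
      hence "Im w = of_int (Y k)" unfolding w(2) kl(3) by (simp add: e_def hor_def)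
      thus False using Iw half_not_int by metis
    next
      assume vk: "ver k"
      hence "Re w = of_int (X k)" unfolding w(2) kl(3) by (simp add: e_def ver_def)
      hence "(of_int (X k)::real) < of_int (a + 1)" "(of_int (a - 1)::real) < of_int (X k)" using Rw u(1,2) by simp_all
      hence "X k < a + 1" "a - 1 < X k" by (simp_all only: of_int_less_iff)
      hence "X k = a" by simp
      moreover have "cov k b"
      proof -
        have I: "Im w = (1 - l) * of_int (Y k) + l * of_int (Y (k+1))" unfolding w(2) kl(3) by (simp add: e_def algebra_simps)
        have "of_int (min (Y k) (Y (k+1))) \<le> Im w" "Im w \<le> of_int (max (Y k) (Y (k+1)))"
          unfolding I using kl(1,2) by (auto intro!: cvx_le cvx_ge)
        hence "of_int (min (Y k) (Y (k+1))) \<le> of_int b + (1/2::real)" "of_int b + (1/2::real) \<le> of_int (max (Y k) (Y (k+1)))"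
          using Iw by simp_all
        hence "min (Y k) (Y (k+1)) \<le> b" "b < max (Y k) (Y (k+1))" by linarith+
        thus ?thesis using vk by (simp add: cov_def)
      qed
      ultimately show False using assms by blast
    qed
  qed
  hence "winding_number g (cc (a - 1) b) = winding_number g (cc a b)"
    by (intro winding_number_eq[OF g_path g_loop _ _ _ _, of _ S]) (auto simp: S_def)
  thus ?thesis by (simp add: W_def)
qed

lemma cov_cong: "i mod int n = j mod int n \<Longrightarrow> cov i b = cov j b"
  unfolding cov_def using ver_cong[of i j] Y_cong[of i j] Y_cong[of "i+1" "j+1"] modc[of i n j 1] by simp

lemma sg_cong: "i mod int n = j mod int n \<Longrightarrow> sg i = sg j"
  unfolding sg_def using Y_cong[of i j] Y_cong[of "i+1" "j+1"] modc[of i n j 1] by simp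

definition Kset :: "int \<Rightarrow> nat set" where "Kset b = {k. k < n \<and> cov (int k) b}"

lemma Kset_fin: "finite (Kset b)" by (simp add: Kset_def)

lemma K_unique: assumes "k \<in> Kset b" "k' \<in> Kset b" "X (int k) = X (int k')" shows "k = k'"
proof -
  obtain l where l: "0 < l" "l < 1" "V (int k) + of_real l * e (int k) = Complex (of_int (X (int k))) (of_int b + 1/2)"
    using cov_pt assms(1) by (auto simp: Kset_def)
  obtain l' where l': "0 < l'" "l' < 1" "V (int k') + of_real l' * e (int k') = Complex (of_int (X (int k'))) (of_int b + 1/2)"
    using cov_pt assms(2) by (auto simp: Kset_def)
  have "int k mod int n = int k' mod int n"
    using inj_pt[of l l' "int k" "int k'"] l l' assms(3) by auto
  thus ?thesis using assms(1,2) by (auto simp: Kset_def)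
qed

lemma W_formula: "a \<ge> xmin - 1 \<Longrightarrow> W a b = - of_int (\<Sum>k\<in>{k\<in>Kset b. X (int k) \<le> a}. sg (int k))"
proof (induction a rule: int_ge_induct)
  case base
  have "\<And>k. xmin \<le> X (int k)" using X_bnd by blast
  hence E: "{k\<in>Kset b. X (int k) \<le> xmin - 1} = {}"
  proof -
    assume xb: "\<And>k. xmin \<le> X (int k)"
    { fix k assume "k \<in> {k\<in>Kset b. X (int k) \<le> xmin - 1}"
      hence "X (int k) \<le> xmin - 1" by simp
      hence False using xb[of k] by linarith }
    thus ?thesis by blast
  qed
  show ?case unfolding E using far_left[of "xmin - 1" b] by simp
next
  case (step a)
  have split: "{k\<in>Kset b. X (int k) \<le> a + 1} = {k\<in>Kset b. X (int k) \<le> a} \<union> {k\<in>Kset b. X (int k) = a + 1}"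
    by auto
  have disj: "{k\<in>Kset b. X (int k) \<le> a} \<inter> {k\<in>Kset b. X (int k) = a + 1} = {}" by auto
  have sumsplit: "(\<Sum>k\<in>{k\<in>Kset b. X (int k) \<le> a + 1}. sg (int k)) =
     (\<Sum>k\<in>{k\<in>Kset b. X (int k) \<le> a}. sg (int k)) + (\<Sum>k\<in>{k\<in>Kset b. X (int k) = a + 1}. sg (int k))"
    unfolding split by (rule sum.union_disjoint) (use Kset_fin disj in auto)
  show ?case
  proof (cases "\<exists>k\<in>Kset b. X (int k) = a + 1")
    case True
    then obtain k where k: "k \<in> Kset b" "X (int k) = a + 1" by blast
    have E1: "{k\<in>Kset b. X (int k) = a + 1} = {k}" using K_unique k by auto
    moreover have "W a b - W (a + 1) b = of_int (sg (int k))"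
      using jump[of "int k" b] k by (simp add: Kset_def)
    ultimately show ?thesis using step.IH sumsplit[unfolded E1] by simp
  next
    case False
    have "W a b = W (a + 1) b"
    proof -
      have "W (a + 1 - 1) b = W (a + 1) b"
      proof (rule no_edge)
        fix k assume ck: "cov k b"
        define k' where "k' = nat (k mod int n)"
        have k': "int k' = k mod int n" "k' < n" using kmod by (auto simp: k'_def)
        have "cov (int k') b" using ck cov_cong[of "int k'" k] k' by simp
        hence "k' \<in> Kset b" using k' by (simp add: Kset_def)
        moreover have "X (int k') = X k" using k' by (intro X_cong) simp
        ultimately show "X k \<noteq> a + 1" using False by auto
      qed
      thus ?thesis by simp
    qed
    moreover have E2: "{k\<in>Kset b. X (int k) = a + 1} = {}" using False by auto
    ultimately show ?thesis using step.IH sumsplit[unfolded E2] by simp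
  qed
qed

end


context opoly begin

lemma row_sum: "(\<Sum>a\<in>{xmin - 1..xmax}. W a b) = of_int (\<Sum>k\<in>Kset b. sg (int k) * X (int k))"
proof -
  define I where "I = {xmin - 1..xmax}"
  define K where "K = Kset b"
  have fK: "finite K" by (simp add: K_def Kset_fin)
  have Wa: "W a b = - of_int (\<Sum>k\<in>K. if X (int k) \<le> a then sg (int k) else 0)" if "a \<in> I" for a
  proof -
    have "W a b = - of_int (\<Sum>k\<in>{k\<in>K. X (int k) \<le> a}. sg (int k))"
      using W_formula[of a b] that by (simp add: I_def K_def)
    also have "(\<Sum>k\<in>{k\<in>K. X (int k) \<le> a}. sg (int k)) = (\<Sum>k\<in>K. if X (int k) \<le> a then sg (int k) else 0)"
      by (rule sum.inter_filter[OF fK])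
    finally show ?thesis .
  qed
  have card: "card {a\<in>I. X (int k) \<le> a} = nat (xmax - X (int k) + 1)" for k
  proof -
    have "{a\<in>I. X (int k) \<le> a} = {X (int k)..xmax}" using X_bnd[of "int k"] by (auto simp: I_def)
    thus ?thesis by simp
  qed
  have "(\<Sum>a\<in>I. (\<Sum>k\<in>K. if X (int k) \<le> a then sg (int k) else 0)) =
        (\<Sum>k\<in>K. (\<Sum>a\<in>I. if X (int k) \<le> a then sg (int k) else 0))"
    by (rule sum.swap)
  also have "\<dots> = (\<Sum>k\<in>K. sg (int k) * (xmax - X (int k) + 1))"
  proof (rule sum.cong[OF refl])
    fix k assume "k \<in> K"
    have "(\<Sum>a\<in>I. if X (int k) \<le> a then sg (int k) else 0) = (\<Sum>a\<in>{a\<in>I. X (int k) \<le> a}. sg (int k))"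
      by (rule sum.inter_filter[symmetric]) (simp add: I_def)
    also have "\<dots> = sg (int k) * int (card {a\<in>I. X (int k) \<le> a})" by simp
    also have "\<dots> = sg (int k) * (xmax - X (int k) + 1)" using card[of k] X_bnd[of "int k"] by simp
    finally show "(\<Sum>a\<in>I. if X (int k) \<le> a then sg (int k) else 0) = sg (int k) * (xmax - X (int k) + 1)" .
  qed
  also have "\<dots> = (xmax + 1) * (\<Sum>k\<in>K. sg (int k)) - (\<Sum>k\<in>K. sg (int k) * X (int k))"
    by (simp add: sum_distrib_left sum_subtractf[symmetric] algebra_simps)
  also have "(\<Sum>k\<in>K. sg (int k)) = 0"
  proof -
    have "{k\<in>K. X (int k) \<le> xmax} = K" using X_bnd by auto
    hence "W xmax b = - of_int (\<Sum>k\<in>K. sg (int k))"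
      using W_formula[of xmax b] X_bnd[of 0] by (simp add: K_def)
    thus ?thesis using far_right[of xmax b] by (simp flip: of_int_sum)
  qed
  finally have "(\<Sum>a\<in>I. (\<Sum>k\<in>K. if X (int k) \<le> a then sg (int k) else 0)) = - (\<Sum>k\<in>K. sg (int k) * X (int k))"
    by simp
  moreover have "(\<Sum>a\<in>I. W a b) = - of_int (\<Sum>a\<in>I. (\<Sum>k\<in>K. if X (int k) \<le> a then sg (int k) else 0))"
    using Wa by (simp add: sum_negf)
  ultimately show ?thesis by (simp add: I_def K_def)
qed

lemma col_sum: "(\<Sum>b\<in>{ymin..<ymax}. \<Sum>k\<in>Kset b. sg (int k) * X (int k)) = (\<Sum>k<n. X (int k) * (Y (int k + 1) - Y (int k)))"
proof -
  define J where "J = {ymin..<ymax}"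
  have "(\<Sum>b\<in>J. \<Sum>k\<in>Kset b. sg (int k) * X (int k)) = (\<Sum>b\<in>J. \<Sum>k<n. if cov (int k) b then sg (int k) * X (int k) else 0)"
  proof (rule sum.cong[OF refl])
    fix b
    have "Kset b = {k\<in>{..<n}. cov (int k) b}" by (auto simp: Kset_def)
    thus "(\<Sum>k\<in>Kset b. sg (int k) * X (int k)) = (\<Sum>k<n. if cov (int k) b then sg (int k) * X (int k) else 0)"
      using sum.inter_filter[of "{..<n}" "\<lambda>k. sg (int k) * X (int k)" "\<lambda>k. cov (int k) b"] by simp
  qed
  also have "\<dots> = (\<Sum>k<n. \<Sum>b\<in>J. if cov (int k) b then sg (int k) * X (int k) else 0)" by (rule sum.swap)
  also have "\<dots> = (\<Sum>k<n. X (int k) * (Y (int k + 1) - Y (int k)))"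
  proof (rule sum.cong[OF refl])
    fix k
    have "(\<Sum>b\<in>J. if cov (int k) b then sg (int k) * X (int k) else 0) = (\<Sum>b\<in>{b\<in>J. cov (int k) b}. sg (int k) * X (int k))"
      by (rule sum.inter_filter[symmetric]) (simp add: J_def)
    also have "\<dots> = sg (int k) * X (int k) * int (card {b\<in>J. cov (int k) b})" by simp
    also have "\<dots> = X (int k) * (Y (int k + 1) - Y (int k))"
    proof (cases "ver (int k)")
      case True
      have "{b\<in>J. cov (int k) b} = {min (Y (int k)) (Y (int k + 1))..<max (Y (int k)) (Y (int k + 1))}"
        using Y_bnd[of "int k"] Y_bnd[of "int k + 1"] True by (auto simp: J_def cov_def)
      hence "int (card {b\<in>J. cov (int k) b}) = max (Y (int k)) (Y (int k + 1)) - min (Y (int k)) (Y (int k + 1))"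
        by simp
      thus ?thesis using sg_cases[OF True] by auto
    next
      case False
      hence "hor (int k)" using hor_ver by blast
      hence "Y (int k + 1) = Y (int k)" by (simp add: hor_def)
      moreover have E: "{b\<in>J. cov (int k) b} = {}" using False by (simp add: cov_def)
      ultimately show ?thesis unfolding E by simp
    qed
    finally show "(\<Sum>b\<in>J. if cov (int k) b then sg (int k) * X (int k) else 0) = X (int k) * (Y (int k + 1) - Y (int k))" .
  qed
  finally show ?thesis by (simp add: J_def)
qed

lemma area_eq: "signed_area2 P = 2 * (\<Sum>k<n. X (int k) * (Y (int k + 1) - Y (int k)))"
proof -
  have trm: "X (int k) * Y (int k + 1) - X (int k + 1) * Y (int k) =
     2 * (X (int k) * (Y (int k + 1) - Y (int k))) - (X (int (Suc k)) * Y (int (Suc k)) - X (int k) * Y (int k))" for k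
  proof -
    have "int (Suc k) = int k + 1" by simp
    moreover have "hor (int k) \<or> ver (int k)" by (rule hor_ver)
    ultimately show ?thesis by (auto simp: hor_def ver_def algebra_simps)
  qed
  have tel: "(\<Sum>k<n. X (int (Suc k)) * Y (int (Suc k)) - X (int k) * Y (int k)) = X (int n) * Y (int n) - X 0 * Y 0"
    using sum_lessThan_telescope[of "\<lambda>k. X (int k) * Y (int k)" n] by simp
  have "X (int n) = X 0" "Y (int n) = Y 0" by (auto intro: X_cong Y_cong)
  hence tel0: "(\<Sum>k<n. X (int (Suc k)) * Y (int (Suc k)) - X (int k) * Y (int k)) = 0" using tel by simp
  have "signed_area2 P = (\<Sum>k<n. X (int k) * Y (int k + 1) - X (int k + 1) * Y (int k))"
    by (simp add: signed_area2_def nP X_def Y_def)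
  also have "\<dots> = (\<Sum>k<n. 2 * (X (int k) * (Y (int k + 1) - Y (int k)))) - (\<Sum>k<n. X (int (Suc k)) * Y (int (Suc k)) - X (int k) * Y (int k))"
    unfolding trm by (simp add: sum_subtractf)
  also have "\<dots> = 2 * (\<Sum>k<n. X (int k) * (Y (int k + 1) - Y (int k)))" using tel0 by (simp add: sum_distrib_left)
  finally show ?thesis .
qed

end


context opoly begin

lemma tsg_pm: "tsg i = 1 \<or> tsg i = -1"
  using turn_nz[of i] by (auto simp: tsg_def sgn_if)

lemma tsg_cong: "i mod int n = j mod int n \<Longrightarrow> tsg i = tsg j"
  using turn_cong[of i j] by (simp add: tsg_def)

lemma sum_shift: "(\<Sum>i<n. f (j + int i)) = (\<Sum>i<n. f (int i))" if per: "\<And>a b. a mod int n = b mod int n \<Longrightarrow> f a = f b"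
  for f :: "int \<Rightarrow> int" and j :: int
proof -
  define hm where "hm i = nat ((j + int i) mod int n)" for i
  have hm_lt: "hm i < n" for i using n_pos by (simp add: hm_def nat_less_iff)
  have inj: "inj_on hm {..<n}"
  proof (rule inj_onI)
    fix x y assume xy: "x \<in> {..<n}" "y \<in> {..<n}" "hm x = hm y"
    moreover have "(j + int x) mod int n \<ge> 0" "(j + int y) mod int n \<ge> 0" using n_pos by simp_all
    ultimately have "(j + int x) mod int n = (j + int y) mod int n" by (simp add: hm_def eq_nat_nat_iff)
    hence "int x mod int n = int y mod int n" using modc[of "j + int x" n "j + int y" "-j"] by simp
    thus "x = y" using xy by (simp add: zmod_int)
  qed
  have img: "hm ` {..<n} = {..<n}"
    using inj hm_lt by (intro endo_inj_surj) auto
  have "(\<Sum>i<n. f (int i)) = (\<Sum>i<n. f (int (hm i)))"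
    using sum.reindex_bij_betw[of hm "{..<n}" "{..<n}" "\<lambda>m. f (int m)"] inj img
    by (simp add: bij_betw_def)
  also have "\<dots> = (\<Sum>i<n. f (j + int i))"
    using n_pos by (intro sum.cong refl per) (simp add: hm_def)
  finally show ?thesis by simp
qed

end

context opoly_low begin

lemma tsg_dir: "(ver (j0-1) \<and> Y (j0-1) > Y j0 \<and> tsg j0 = 1) \<or> (ver j0 \<and> Y (j0+1) > Y j0 \<and> tsg j0 = -1)"
  using dir_j0
proof (elim disjE conjE)
  assume a: "hor j0" "ver (j0 - 1)" "X j0 < X (j0 + 1)" "Y j0 < Y (j0 - 1)"
  have "turn P j0 > 0" using a unfolding turn_eq hor_def ver_def by (simp add: mult_neg_pos)
  hence "tsg j0 = 1" by (simp add: tsg_def)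
  thus ?thesis using a by simp
next
  assume a: "ver j0" "hor (j0 - 1)" "Y j0 < Y (j0 + 1)" "X j0 < X (j0 - 1)"
  have "turn P j0 < 0" using a unfolding turn_eq hor_def ver_def by (simp add: mult_neg_pos)
  hence "tsg j0 = -1" by (simp add: tsg_def)
  thus ?thesis using a by simp
qed

lemma W0: "W (X j0) (Y j0) = of_int (tsg j0)"
proof -
  define x0 where "x0 = X j0"
  define y0 where "y0 = Y j0"
  have E: "{k\<in>Kset y0. X (int k) \<le> x0 - 1} = {}"
  proof -
    { fix k assume k: "k \<in> Kset y0" "X (int k) \<le> x0 - 1"
      hence c: "cov (int k) y0" by (simp add: Kset_def)
      hence v: "X (int k + 1) = X (int k)" by (simp add: cov_def ver_def)
      have "min (Y (int k)) (Y (int k + 1)) \<le> y0" using c by (simp add: cov_def)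
      hence "\<exists>v. (v = int k \<or> v = int k + 1) \<and> Y v \<le> y0" by (auto simp: min_def split: if_splits)
      then obtain v where vv: "v = int k \<or> v = int k + 1" "Y v \<le> y0" by blast
      hence "Y v = y0" using low by (auto simp: low_def y0_def intro: antisym)
      hence "x0 \<le> X v" using low by (auto simp: low_def y0_def x0_def)
      moreover have "X v = X (int k)" using vv v by auto
      ultimately have False using k by simp }
    thus ?thesis by blast
  qed
  have "W (x0 - 1) y0 = 0"
    using W_formula[of "x0 - 1" y0] X_bnd[of j0] unfolding E by (simp add: x0_def)
  moreover from tsg_dir have "W (x0 - 1) y0 - W x0 y0 = - of_int (tsg j0)"
  proof
    assume a: "ver (j0-1) \<and> Y (j0-1) > Y j0 \<and> tsg j0 = 1"
    have c: "cov (j0 - 1) y0" using a by (auto simp: cov_def y0_def)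
    have "X (j0 - 1) = x0" using a by (simp add: ver_def x0_def)
    moreover have "sg (j0 - 1) = -1" using a by (simp add: sg_def)
    ultimately show ?thesis using jump[OF c] a by simp
  next
    assume a: "ver j0 \<and> Y (j0+1) > Y j0 \<and> tsg j0 = -1"
    have c: "cov j0 y0" using a by (auto simp: cov_def y0_def)
    have "sg j0 = 1" using a by (simp add: sg_def)
    thus ?thesis using jump[OF c] a by (simp add: x0_def)
  qed
  ultimately show ?thesis by (simp add: x0_def y0_def)
qed

lemma area_sign: "sgn (signed_area2 P) = tsg j0"
proof -
  define s where "s = (of_int (tsg j0) :: real)"
  have s: "s = 1 \<or> s = -1" using tsg_pm[of j0] by (auto simp: s_def)
  define Sg where "Sg = (\<Sum>k<n. X (int k) * (Y (int k + 1) - Y (int k)))"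
  define I where "I = {xmin - 1..xmax}"
  define J where "J = {ymin..<ymax}"
  have nn: "0 \<le> s * W a b" for a b
  proof (cases "W a b = 0")
    case False
    moreover have "W (X j0) (Y j0) \<noteq> 0" using W0 tsg_pm[of j0] by auto
    ultimately have "W a b = W (X j0) (Y j0)" by (rule W_same)
    thus ?thesis using W0 s by (auto simp: s_def)
  qed simp
  have x0I: "X j0 \<in> I" using X_bnd[of j0] by (simp add: I_def)
  have y0J: "Y j0 \<in> J"
  proof -
    have "Y j0 < ymax" using tsg_dir Y_bnd[of "j0-1"] Y_bnd[of "j0+1"] by auto
    thus ?thesis using Y_bnd[of j0] by (simp add: J_def)
  qed
  have "1 = s * W (X j0) (Y j0)" using W0 s by (auto simp: s_def)
  also have "\<dots> \<le> (\<Sum>a\<in>I. s * W a (Y j0))"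
    by (rule member_le_sum) (use nn x0I in \<open>auto simp: I_def\<close>)
  also have "\<dots> \<le> (\<Sum>b\<in>J. \<Sum>a\<in>I. s * W a b)"
    by (rule member_le_sum[where f = "\<lambda>b. \<Sum>a\<in>I. s * W a b"]) (use nn y0J in \<open>auto simp: J_def intro: sum_nonneg\<close>)
  also have "\<dots> = s * (\<Sum>b\<in>J. \<Sum>a\<in>I. W a b)" by (simp add: sum_distrib_left)
  also have "(\<Sum>b\<in>J. \<Sum>a\<in>I. W a b) = of_int (\<Sum>b\<in>J. \<Sum>k\<in>Kset b. sg (int k) * X (int k))"
    unfolding I_def using row_sum by (simp add: of_int_sum)
  also have "\<dots> = of_int Sg"
    unfolding J_def Sg_def using col_sum by simp
  finally have pos: "1 \<le> s * of_int Sg" .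
  show ?thesis
  proof (cases "tsg j0 = 1")
    case True
    hence "Sg > 0" using pos by (simp add: s_def)
    thus ?thesis using True by (simp add: area_eq Sg_def[symmetric])
  next
    case False
    hence t: "tsg j0 = -1" using tsg_pm by blast
    hence "Sg < 0" using pos by (simp add: s_def)
    thus ?thesis using t by (simp add: area_eq Sg_def[symmetric])
  qed
qed

lemma tsg_sum: "(\<Sum>i<n. tsg (int i)) = 4 * tsg j0"
proof -
  have "(\<Sum>i<n. tsg (j0 + int i)) = (\<Sum>i<n. tsg (int i))"
    by (rule sum_shift) (rule tsg_cong)
  thus ?thesis using hopf_shift by simp
qed

end


lemma knob_count:
  fixes P :: "(int \<times> int) list"
  assumes sp: "simple_orth_polygon P"
    and nk: "\<forall>i<length P. \<not> nonknob_convex P (int i)"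
  shows "int (length P) \<le> 4 * int (card (knobs P)) - 4"
proof -
  interpret opoly P "length P" using sp by unfold_locales simp_all
  obtain j0 where j0: "low j0" using low_exists by blast
  interpret opoly_low P "length P" j0 by unfold_locales (rule j0)
  define \<tau> where "\<tau> = tsg j0"
  have area: "sgn (signed_area2 P) = \<tau>" using area_sign by (simp add: \<tau>_def)
  have cv: "convex_vertex P i \<longleftrightarrow> tsg i = \<tau>" for i
  proof -
    have "turn P i \<noteq> 0" by (rule turn_nz)
    moreover have "signed_area2 P \<noteq> 0" using area tsg_pm[of j0] by (auto simp: \<tau>_def)
    ultimately show ?thesis using area tsg_pm[of i]
      by (auto simp: convex_vertex_def tsg_def sgn_if zero_less_mult_iff split: if_splits)
  qed
  have cc: "concave_vertex P i \<longleftrightarrow> tsg i = - \<tau>" for i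
  proof -
    have "turn P i \<noteq> 0" by (rule turn_nz)
    moreover have "signed_area2 P \<noteq> 0" using area tsg_pm[of j0] by (auto simp: \<tau>_def)
    ultimately show ?thesis using area tsg_pm[of i]
      by (auto simp: concave_vertex_def tsg_def sgn_if mult_less_0_iff split: if_splits)
  qed
  have tau: "\<tau> = 1 \<or> \<tau> = -1" using tsg_pm by (simp add: \<tau>_def)
  define Cv where "Cv = {i. i < length P \<and> convex_vertex P (int i)}"
  have fC: "finite Cv" by (simp add: Cv_def)
  have "(\<Sum>i<length P. tsg (int i)) = (\<Sum>i<length P. if i \<in> Cv then \<tau> else - \<tau>)"
  proof (rule sum.cong[OF refl])
    fix i assume "i \<in> {..<length P}"
    thus "tsg (int i) = (if i \<in> Cv then \<tau> else - \<tau>)" using cv[of "int i"] tsg_pm[of "int i"] tau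
      by (auto simp: Cv_def)
  qed
  also have "\<dots> = \<tau> * int (card Cv) - \<tau> * int (length P - card Cv)"
  proof -
    have CvS: "Cv \<subseteq> {..<length P}" by (auto simp: Cv_def)
    have e1: "{..<length P} \<inter> Cv = Cv" and e2: "{..<length P} \<inter> - Cv = {..<length P} - Cv" using CvS by auto
    have "(\<Sum>i<length P. if i \<in> Cv then \<tau> else - \<tau>) = int (card ({..<length P} \<inter> Cv)) * \<tau> - int (card ({..<length P} \<inter> - Cv)) * \<tau>"
      by (simp add: sum.If_cases)
    also have "\<dots> = \<tau> * int (card Cv) - \<tau> * int (length P - card Cv)"
      unfolding e1 e2 using CvS by (simp add: card_Diff_subset finite_subset algebra_simps)
    finally show ?thesis .
  qed
  finally have "\<tau> * int (card Cv) - \<tau> * int (length P - card Cv) = 4 * \<tau>" using tsg_sum by (simp add: \<tau>_def)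
  moreover have "card Cv \<le> length P" by (rule card_mono[of "{..<length P}", simplified]) (auto simp: Cv_def)
  ultimately have cC: "2 * int (card Cv) - int (length P) = 4" using tau by (auto simp: of_nat_diff algebra_simps)
  define K where "K = knobs P"
  have fK: "finite K" by (simp add: K_def knobs_def)
  have sub: "Cv \<subseteq> K \<union> (\<lambda>j. (j + 1) mod length P) ` K"
  proof
    fix i assume i: "i \<in> Cv"
    hence il: "i < length P" and ci: "convex_vertex P (int i)" by (auto simp: Cv_def)
    have "\<not> nonknob_convex P (int i)" using nk il by simp
    hence "\<not> concave_vertex P (int i - 1) \<or> \<not> concave_vertex P (int i + 1)"
      using ci by (simp add: nonknob_convex_def)
    moreover have h: "convex_vertex P m" if "\<not> concave_vertex P m" for m
    proof -
      have "tsg m \<noteq> - \<tau>" using that cc by simp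
      hence "tsg m = \<tau>" using tsg_pm[of m] tau by auto
      thus ?thesis using cv by simp
    qed
    ultimately have "convex_vertex P (int i - 1) \<or> convex_vertex P (int i + 1)" by blast
    thus "i \<in> K \<union> (\<lambda>j. (j + 1) mod length P) ` K"
    proof
      assume "convex_vertex P (int i + 1)"
      hence "i \<in> K" using il ci by (simp add: K_def knobs_def )
      thus ?thesis by blast
    next
      assume a: "convex_vertex P (int i - 1)"
      define j where "j = (i + length P - 1) mod length P"
      have jl: "j < length P" using n_pos by (simp add: j_def)
      have jm: "int j mod int (length P) = (int i - 1) mod int (length P)"
      proof -
        have "i + length P \<ge> 1" using n_pos by linarith
        hence "int (i + length P - 1) = int i + int (length P) - 1" by (simp add: of_nat_diff)
        hence "int j = (int i + int (length P) - 1) mod int (length P)"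
          by (simp add: j_def zmod_int)
        also have "int i + int (length P) - 1 = (int i - 1) + int (length P)" by simp
        finally show ?thesis by simp
      qed
      have jm1: "(int j + 1) mod int (length P) = int i mod int (length P)"
        using modc[OF jm, of 1] by simp
      have "convex_vertex P (int j)" using a cv tsg_cong[OF jm] by simp
      moreover have "convex_vertex P (int j + 1)" using ci cv tsg_cong[OF jm1] by simp
      ultimately have "j \<in> K" using jl by (simp add: K_def knobs_def )
      moreover have "(j + 1) mod length P = i"
      proof -
        have "int ((j + 1) mod length P) = (int j + 1) mod int (length P)" by (simp add: zmod_int add.commute)
        also have "\<dots> = int i" using jm1 il by simp
        finally show ?thesis by simp
      qed
      ultimately show ?thesis by blast
    qed
  qed
  have "card Cv \<le> card (K \<union> (\<lambda>j. (j + 1) mod length P) ` K)" by (rule card_mono) (use fK sub in auto)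
  also have "\<dots> \<le> card K + card ((\<lambda>j. (j + 1) mod length P) ` K)" by (rule card_Un_le)
  also have "\<dots> \<le> card K + card K" using card_image_le[OF fK] by simp
  finally have "card Cv \<le> 2 * card K" by simp
  thus ?thesis using cC by (simp add: K_def )
qed

theorem lemma6p8:
  fixes P :: "(int \<times> int) list" and k :: nat
  assumes "simple_orth_polygon P"
    and "card (knobs P) \<le> k"
    and "\<forall>i<length P. \<not> nonknob_convex P (int i)"
  shows "int (length P) \<le> 4 * int k - 4"
  using knob_count[OF assms(1,3)] assms(2) by linarith



end
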